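(* Let $k\in\{1,2,\dots\}\cup\{\infty\}$. (1) For every $C^k$-atlas $\mathcal{U}$ on $\mathbb{R}$ there exists a chain-like $C^k$-atlas $\mathcal{V}$ on $\mathbb{R}$ which is $C^k$-compatible with $\mathcal{U}$. (2) If $\mathcal{V}$ is a chain-like $C^k$-atlas on $\mathbb{R}$, then there exists a homeomorphism $\omega\colon\mathbb{R}\to\mathbb{R}$ such that the chart $(\mathbb{R},\omega)$ is $C^k$-compatible with $\mathcal{V}$.
   Context: Here $\mathbb{R}$ is regarded as a topological space. A chart on $\mathbb{R}$ is a homeomorphism $\varphi\colon U\to\varphi(U)$ of an open $U\subset\mathbb{R}$ onto an open subset of $\mathbb{R}$; charts $(U,\varphi),(V,\psi)$ are $C^k$-compatible if $U\cap V=\varnothing$ or $\psi\circ\varphi^{-1}\colon\varphi(U\cap V)\to\psi(U\cap V)$ is a $C^k$-diffeomorphism; a $C^k$-atlas is a family of pairwise compatible charts whose domains cover $\mathbb{R}$; a chart or atlas is $C^k$-compatible with an atlas if their union is a (partial) family of pairwise $C^k$-compatible charts. Two charts $(U,\varphi),(V,\psi)$ are $C^k$-joinable if they are $C^k$-compatible and there are reals $a<b<c<d$ with $\varphi(U)=(a,c)$, $\varphi(U\cap V)=\psi(U\cap V)=(b,c)$, $\psi(V)=(b,d)$. A countable $C^k$-atlas $\{(V_i,\psi_i)\}_{i\in\mathbb{Z}}$ on $\mathbb{R}$ is chain-like if for every $i\in\mathbb{Z}$: (G1) $(V_i,\psi_i)$ and $(V_{i+1},\psi_{i+1})$ are $C^k$-joinable,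 and (G2) $V_j\cap V_i\cap V_{i+1}=\varnothing$ for all $j\neq i,i+1$. *)

theory Defs
  imports "HOL-Analysis.Analysis" "HOL-Library.Extended_Nat"
begin

type_synonym chart = "real set \<times> (real \<Rightarrow> real)"

fun Cn_on :: "nat \<Rightarrow> real set \<Rightarrow> (real \<Rightarrow> real) \<Rightarrow> bool" where
  "Cn_on 0 S f = continuous_on S f"
| "Cn_on (Suc n) S f = ((\<forall>x\<in>S. f differentiable (at x)) \<and> Cn_on n S (deriv f))"

definition Ck_on :: "enat \<Rightarrow> real set \<Rightarrow> (real \<Rightarrow> real) \<Rightarrow> bool" where
  "Ck_on k S f \<longleftrightarrow> (\<forall>n::nat. enat n \<le> k \<longrightarrow> Cn_on n S f)"

definition Ck_diffeo :: "enat \<Rightarrow> real set \<Rightarrow> real set \<Rightarrow> (real \<Rightarrow> real) \<Rightarrow> bool" where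
  "Ck_diffeo k A B g \<longleftrightarrow> bij_betw g A B \<and> Ck_on k A g \<and> Ck_on k B (inv_into A g)"

definition is_chart :: "chart \<Rightarrow> bool" where
  "is_chart c \<longleftrightarrow> (case c of (U, \<phi>) \<Rightarrow>
     open U \<and> open (\<phi> ` U) \<and> (\<exists>\<psi>. homeomorphism U (\<phi> ` U) \<phi> \<psi>))"

definition Ck_compatible :: "enat \<Rightarrow> chart \<Rightarrow> chart \<Rightarrow> bool" where
  "Ck_compatible k c d \<longleftrightarrow> (case c of (U, \<phi>) \<Rightarrow> case d of (V, \<psi>) \<Rightarrow>
     U \<inter> V = {} \<or>
     Ck_diffeo k (\<phi> ` (U \<inter> V)) (\<psi> ` (U \<inter> V)) (\<psi> \<circ> inv_into U \<phi>))"

definition Ck_compatible_family :: "enat \<Rightarrow> chart set \<Rightarrow> bool" where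
  "Ck_compatible_family k A \<longleftrightarrow>
     (\<forall>c\<in>A. is_chart c) \<and> (\<forall>c\<in>A. \<forall>d\<in>A. Ck_compatible k c d)"

definition Ck_atlas :: "enat \<Rightarrow> chart set \<Rightarrow> bool" where
  "Ck_atlas k A \<longleftrightarrow> Ck_compatible_family k A \<and> (\<Union>(fst ` A) = UNIV)"

definition Ck_compatible_with :: "enat \<Rightarrow> chart set \<Rightarrow> chart set \<Rightarrow> bool" where
  "Ck_compatible_with k B A \<longleftrightarrow> Ck_compatible_family k (A \<union> B)"

definition Ck_joinable :: "enat \<Rightarrow> chart \<Rightarrow> chart \<Rightarrow> bool" where
  "Ck_joinable k c d \<longleftrightarrow> Ck_compatible k c d \<and> (case c of (U, \<phi>) \<Rightarrow> case d of (V, \<psi>) \<Rightarrow>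
     (\<exists>a b c' e::real. a < b \<and> b < c' \<and> c' < e \<and>
        \<phi> ` U = {a<..<c'} \<and> \<phi> ` (U \<inter> V) = {b<..<c'} \<and>
        \<psi> ` (U \<inter> V) = {b<..<c'} \<and> \<psi> ` V = {b<..<e}))"

definition chain_like :: "enat \<Rightarrow> (int \<Rightarrow> chart) \<Rightarrow> bool" where
  "chain_like k V \<longleftrightarrow> Ck_atlas k (range V) \<and>
     (\<forall>i. Ck_joinable k (V i) (V (i + 1))) \<and>
     (\<forall>i j. j \<noteq> i \<and> j \<noteq> i + 1 \<longrightarrow> fst (V j) \<inter> fst (V i) \<inter> fst (V (i + 1)) = {})"

end

theory Submission
  imports Defs "HOL-Computational_Algebra.Polynomial"
begin


lemma rdiff_fd: "(f::real\<Rightarrow>real) differentiable (at x) \<Longrightarrow> f field_differentiable (at x)"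
  by (auto simp: real_differentiable_def field_differentiable_def)

lemma Cn_mono_set: "Cn_on n S f \<Longrightarrow> T \<subseteq> S \<Longrightarrow> Cn_on n T f"
  by (induction n arbitrary: f) (auto intro: continuous_on_subset)

lemma Cn_Suc_imp: "Cn_on (Suc n) S f \<Longrightarrow> Cn_on n S f"
proof (induction n arbitrary: f)
  case 0
  then show ?case
    by (auto intro!: continuous_at_imp_continuous_on differentiable_imp_continuous_within)
next
  case (Suc n)
  then show ?case by auto
qed

lemma Cn_le: "Cn_on n S f \<Longrightarrow> m \<le> n \<Longrightarrow> Cn_on m S f"
proof (induction n)
  case 0 then show ?case by simp
next
  case (Suc n) then show ?case using Cn_Suc_imp by (metis le_Suc_eq)
qed

lemma Cn_cong:
  assumes "open S" "\<And>x. x \<in> S \<Longrightarrow> f x = g x" "Cn_on n S f"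
  shows "Cn_on n S g"
  using assms
proof (induction n arbitrary: f g)
  case 0 then show ?case using continuous_on_cong by force
next
  case (Suc n)
  have ev: "\<And>x. x \<in> S \<Longrightarrow> eventually (\<lambda>y. f y = g y) (nhds x)"
    using Suc.prems(1,2) eventually_nhds by blast
  have d: "\<forall>x\<in>S. g differentiable (at x)"
  proof
    fix x assume x: "x \<in> S"
    then have "f differentiable (at x)" using Suc.prems by auto
    then show "g differentiable (at x)"
      using has_derivative_transform_within_open[of f _ x UNIV S g] Suc.prems x
      unfolding differentiable_def by blast
  qed
  have "Cn_on n S (deriv g)"
    apply (rule Suc.IH[of "deriv f"])
    using Suc.prems ev by (auto intro!: deriv_cong_ev)
  then show ?case using d by simp
qed

lemma Cn_local:
  assumes "open S" "\<And>x. x \<in> S \<Longrightarrow> \<exists>T. open T \<and> x \<in> T \<and> T \<subseteq> S \<and> Cn_on n T f"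
  shows "Cn_on n S f"
  using assms
proof (induction n arbitrary: f)
  case 0
  show ?case unfolding Cn_on.simps
  proof (rule continuous_at_imp_continuous_on, rule ballI)
    fix x assume "x \<in> S"
    then obtain T where T: "open T" "x \<in> T" "continuous_on T f" using 0 by auto
    then show "isCont f x" using continuous_on_eq_continuous_at by blast
  qed
next
  case (Suc n)
  have "\<forall>x\<in>S. f differentiable (at x)" using Suc.prems by fastforce
  moreover have "Cn_on n S (deriv f)"
    apply (rule Suc.IH) using Suc.prems by fastforce+
  ultimately show ?case by simp
qed

lemma Cn_const: "Cn_on n S (\<lambda>x. c)"
  by (induction n arbitrary: c) (auto simp: deriv_const)

lemma deriv_id': "deriv (\<lambda>x. x) = (\<lambda>x. 1::real)"
  by (rule ext) (simp add: DERIV_imp_deriv)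

lemma Cn_id: "Cn_on n S (\<lambda>x::real. x)"
  by (cases n) (auto simp: deriv_id' Cn_const continuous_on_id)

lemma Cn_add:
  assumes "open S" "Cn_on n S f" "Cn_on n S g"
  shows "Cn_on n S (\<lambda>x. f x + g x)"
  using assms
proof (induction n arbitrary: f g)
  case 0 then show ?case by (auto intro: continuous_on_add)
next
  case (Suc n)
  have "Cn_on n S (\<lambda>x. deriv f x + deriv g x)" using Suc by auto
  then have "Cn_on n S (deriv (\<lambda>x. f x + g x))"
    apply (rule Cn_cong[OF \<open>open S\<close>, rotated])
    using Suc.prems by (auto intro!: deriv_add[symmetric] rdiff_fd)
  then show ?case using Suc.prems by auto
qed

lemma Cn_mult:
  assumes "open S" "Cn_on n S f" "Cn_on n S g"
  shows "Cn_on n S (\<lambda>x. f x * g x)"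
  using assms
proof (induction n arbitrary: f g)
  case 0 then show ?case by (auto intro: continuous_on_mult)
next
  case (Suc n)
  have fn: "Cn_on n S f" and gn: "Cn_on n S g" using Suc.prems Cn_Suc_imp by blast+
  have "Cn_on n S (\<lambda>x. f x * deriv g x + deriv f x * g x)"
    using Suc fn gn by (auto intro!: Cn_add)
  then have "Cn_on n S (deriv (\<lambda>x. f x * g x))"
    apply (rule Cn_cong[OF \<open>open S\<close>, rotated])
    using Suc.prems by (auto intro!: deriv_mult[symmetric] rdiff_fd)
  then show ?case using Suc.prems by auto
qed

lemma deriv_of_diff: "(f::real\<Rightarrow>real) differentiable (at x) \<Longrightarrow> (f has_real_derivative deriv f x) (at x)"
  using DERIV_deriv_iff_real_differentiable by blast

lemma Cn_diff: "Cn_on (Suc n) S f \<Longrightarrow> x \<in> S \<Longrightarrow> f differentiable (at x)"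
  by simp

lemma Cn_cont: "Cn_on n S f \<Longrightarrow> continuous_on S f"
  using Cn_le[of n S f 0] by simp

lemma Cn_inverse:
  assumes "open S" "Cn_on n S f" "\<And>x. x \<in> S \<Longrightarrow> f x \<noteq> 0"
  shows "Cn_on n S (\<lambda>x. inverse (f x))"
  using assms
proof (induction n arbitrary: f)
  case 0 then show ?case by (auto intro: continuous_on_inverse)
next
  case (Suc n)
  have fn: "Cn_on n S f" using Suc.prems Cn_Suc_imp by blast
  have i: "Cn_on n S (\<lambda>x. inverse (f x))" by (rule Suc.IH[OF Suc.prems(1) fn Suc.prems(3)])
  have d1: "Cn_on n S (deriv f)" using Suc.prems by simp
  have "Cn_on n S (\<lambda>x. deriv f x * inverse (f x))" by (rule Cn_mult[OF Suc.prems(1) d1 i])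
  then have "Cn_on n S (\<lambda>x. inverse (f x) * (deriv f x * inverse (f x)))" by (rule Cn_mult[OF Suc.prems(1) i])
  then have A: "Cn_on n S (\<lambda>x. (-1) * (inverse (f x) * (deriv f x * inverse (f x))))"
    by (rule Cn_mult[OF Suc.prems(1) Cn_const])
  have B: "\<And>x. x \<in> S \<Longrightarrow> (-1) * (inverse (f x) * (deriv f x * inverse (f x)))
      = deriv (\<lambda>x. inverse (f x)) x"
  proof -
    fix x assume x: "x \<in> S"
    have "((\<lambda>x. inverse (f x)) has_real_derivative - (inverse (f x) * deriv f x * inverse (f x))) (at x)"
      by (rule DERIV_inverse'[OF deriv_of_diff]) (use Suc.prems x in auto)
    then show "(-1) * (inverse (f x) * (deriv f x * inverse (f x))) = deriv (\<lambda>x. inverse (f x)) x"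
      by (auto dest!: DERIV_imp_deriv simp: algebra_simps)
  qed
  have "Cn_on n S (deriv (\<lambda>x. inverse (f x)))"
    by (rule Cn_cong[OF \<open>open S\<close> B A])
  moreover have "\<forall>x\<in>S. (\<lambda>x. inverse (f x)) differentiable (at x)"
  proof
    fix x assume x: "x \<in> S"
    have "((\<lambda>x. inverse (f x)) has_real_derivative - (inverse (f x) * deriv f x * inverse (f x))) (at x)"
      by (rule DERIV_inverse'[OF deriv_of_diff]) (use Suc.prems x in auto)
    then show "(\<lambda>x. inverse (f x)) differentiable (at x)" using real_differentiable_def by blast
  qed
  ultimately show ?case by simp
qed

lemma Cn_comp:
  assumes "open S" "open T" "g ` S \<subseteq> T" "Cn_on n T f" "Cn_on n S g"
  shows "Cn_on n S (\<lambda>x. f (g x))"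
  using assms
proof (induction n arbitrary: f g)
  case 0 then show ?case by (auto intro: continuous_on_compose2)
next
  case (Suc n)
  have fn: "Cn_on n T f" and gn: "Cn_on n S g" using Suc.prems Cn_Suc_imp by blast+
  have dT: "Cn_on n T (deriv f)" using Suc.prems by simp
  have A: "Cn_on n S (\<lambda>x. deriv f (g x) * deriv g x)"
  proof (rule Cn_mult[OF Suc.prems(1)])
    show "Cn_on n S (\<lambda>x. deriv f (g x))" by (rule Suc.IH[OF Suc.prems(1,2,3) dT gn])
    show "Cn_on n S (deriv g)" using Suc.prems by simp
  qed
  have B: "\<And>x. x \<in> S \<Longrightarrow> deriv f (g x) * deriv g x = deriv (\<lambda>x. f (g x)) x"
  proof -
    fix x assume x: "x \<in> S"
    then have "g x \<in> T" using Suc.prems by auto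
    then show "deriv f (g x) * deriv g x = deriv (\<lambda>x. f (g x)) x"
      using real_derivative_chain[of g x f] Suc.prems x by (auto simp: o_def)
  qed
  have "Cn_on n S (deriv (\<lambda>x. f (g x)))"
    by (rule Cn_cong[OF \<open>open S\<close> B A])
  moreover have "\<forall>x\<in>S. (\<lambda>x. f (g x)) differentiable (at x)"
  proof
    fix x assume x: "x \<in> S"
    then have "g x \<in> T" using Suc.prems by auto
    then show "(\<lambda>x. f (g x)) differentiable (at x)"
      using Suc.prems x differentiable_chain_at[of g x f] by (auto simp: o_def)
  qed
  ultimately show ?case by simp
qed

lemma Cn_inv_fun:
  assumes S: "open S" and inj: "inj_on f S" and C: "Cn_on n S f"
    and d: "\<And>x. x \<in> S \<Longrightarrow> f differentiable (at x) \<and> deriv f x \<noteq> 0"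
  shows "Cn_on n (f ` S) (inv_into S f)"
  using C
proof (induction n)
  have cf: "continuous_on S f"
    using d by (auto intro!: continuous_at_imp_continuous_on differentiable_imp_continuous_within)
  have cg: "continuous_on (f ` S) (inv_into S f)"
    by (rule continuous_on_inverse_open[OF S cf]) (use inj in auto)
  have oT: "open (f ` S)" by (rule invariance_of_domain[OF cf S inj])
  {
    case 0 then show ?case using cg by simp
  next
    case (Suc n)
    let ?g = "inv_into S f"
    have der: "(?g has_real_derivative inverse (deriv f (?g y))) (at y)" if y: "y \<in> f ` S" for y
    proof (rule has_field_derivative_inverse_basic[where t="f ` S"])
      have "?g y \<in> S" using y by (auto simp: inv_into_into)
      then show "(f has_real_derivative deriv f (?g y)) (at (?g y))" "deriv f (?g y) \<noteq> 0"
        using d deriv_of_diff by blast+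
      show "continuous (at y) ?g" using cg oT y continuous_on_eq_continuous_at by blast
    qed (use oT y in \<open>auto simp: f_inv_into_f\<close>)
    have gn: "Cn_on n (f ` S) ?g" using Suc Cn_Suc_imp by blast
    have C1: "Cn_on n (f ` S) (\<lambda>y. inverse (deriv f (?g y)))"
      apply (rule Cn_inverse[OF oT])
       apply (rule Cn_comp[OF oT S _ _ gn])
      using Suc.prems d by (auto simp: inv_into_into)
    have "Cn_on n (f ` S) (deriv ?g)"
    proof (rule Cn_cong[OF oT _ C1])
      fix y assume "y \<in> f ` S"
      then show "inverse (deriv f (?g y)) = deriv ?g y" using DERIV_imp_deriv[OF der] by simp
    qed
    moreover have "\<forall>y\<in>f ` S. ?g differentiable (at y)"
      using der real_differentiable_def by blast
    ultimately show ?case by simp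
  }
qed


lemma CkI: "(\<And>n. enat n \<le> k \<Longrightarrow> Cn_on n S f) \<Longrightarrow> Ck_on k S f"
  unfolding Ck_on_def by blast
lemma CkD: "Ck_on k S f \<Longrightarrow> enat n \<le> k \<Longrightarrow> Cn_on n S f"
  unfolding Ck_on_def by blast

lemma Ck_mono_set: "Ck_on k S f \<Longrightarrow> T \<subseteq> S \<Longrightarrow> Ck_on k T f"
  by (rule CkI, rule Cn_mono_set[OF CkD])
lemma Ck_cong: "open S \<Longrightarrow> (\<And>x. x \<in> S \<Longrightarrow> f x = g x) \<Longrightarrow> Ck_on k S f \<Longrightarrow> Ck_on k S g"
  by (rule CkI, rule Cn_cong[OF _ _ CkD])
lemma Ck_local:
  assumes "open S" "\<And>x. x \<in> S \<Longrightarrow> \<exists>T. open T \<and> x \<in> T \<and> T \<subseteq> S \<and> Ck_on k T f"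
  shows "Ck_on k S f"
proof (rule CkI)
  fix n assume n: "enat n \<le> k"
  show "Cn_on n S f"
  proof (rule Cn_local[OF assms(1)])
    fix x assume "x \<in> S"
    then obtain T where "open T \<and> x \<in> T \<and> T \<subseteq> S \<and> Ck_on k T f" using assms(2) by blast
    then show "\<exists>T. open T \<and> x \<in> T \<and> T \<subseteq> S \<and> Cn_on n T f" using CkD[OF _ n] by blast
  qed
qed
lemma Ck_const: "Ck_on k S (\<lambda>x. c)"
  by (rule CkI, rule Cn_const)
lemma Ck_id: "Ck_on k S (\<lambda>x::real. x)"
  by (rule CkI, rule Cn_id)
lemma Ck_add: "open S \<Longrightarrow> Ck_on k S f \<Longrightarrow> Ck_on k S g \<Longrightarrow> Ck_on k S (\<lambda>x. f x + g x)"
  by (rule CkI, rule Cn_add[OF _ CkD CkD])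
lemma Ck_mult: "open S \<Longrightarrow> Ck_on k S f \<Longrightarrow> Ck_on k S g \<Longrightarrow> Ck_on k S (\<lambda>x. f x * g x)"
  by (rule CkI, rule Cn_mult[OF _ CkD CkD])
lemma Ck_inverse: "open S \<Longrightarrow> Ck_on k S f \<Longrightarrow> (\<And>x. x \<in> S \<Longrightarrow> f x \<noteq> 0) \<Longrightarrow> Ck_on k S (\<lambda>x. inverse (f x))"
  by (rule CkI, rule Cn_inverse[OF _ CkD])
lemma Ck_comp: "open S \<Longrightarrow> open T \<Longrightarrow> g ` S \<subseteq> T \<Longrightarrow> Ck_on k T f \<Longrightarrow> Ck_on k S g \<Longrightarrow> Ck_on k S (\<lambda>x. f (g x))"
  by (rule CkI, rule Cn_comp[OF _ _ _ CkD CkD])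
lemma Ck_inv_fun: "open S \<Longrightarrow> inj_on f S \<Longrightarrow> Ck_on k S f \<Longrightarrow>
   (\<And>x. x \<in> S \<Longrightarrow> f differentiable (at x) \<and> deriv f x \<noteq> 0) \<Longrightarrow> Ck_on k (f ` S) (inv_into S f)"
  by (rule CkI, rule Cn_inv_fun[OF _ _ CkD])
lemma Ck_cont: "Ck_on k S f \<Longrightarrow> continuous_on S f"
  unfolding Ck_on_def by (metis Cn_on.simps(1) zero_enat_def zero_le)
lemma Ck_diff: "Ck_on k S f \<Longrightarrow> k \<ge> 1 \<Longrightarrow> x \<in> S \<Longrightarrow> f differentiable (at x)"
  unfolding Ck_on_def by (metis Cn_diff One_nat_def one_enat_def)
lemma Cn_empty: "Cn_on n {} f"
  by (induction n arbitrary: f) auto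

definition TG :: "enat \<Rightarrow> real set \<Rightarrow> (real \<Rightarrow> real) \<Rightarrow> bool" where
  "TG k S f \<longleftrightarrow> open S \<and> Ck_on k S f \<and> (\<forall>x\<in>S. f differentiable (at x) \<and> deriv f x \<noteq> 0)"

lemma TG_subset: "TG k S f \<Longrightarrow> T \<subseteq> S \<Longrightarrow> open T \<Longrightarrow> TG k T f"
  unfolding TG_def by (metis Ck_mono_set subsetD)

lemma TG_empty: "TG k {} f"
  unfolding TG_def Ck_on_def by (auto intro: Cn_empty)

lemma TG_local:
  assumes "open S" "\<And>x. x \<in> S \<Longrightarrow> \<exists>T. open T \<and> x \<in> T \<and> T \<subseteq> S \<and> TG k T f"
  shows "TG k S f"
  unfolding TG_def
proof (intro conjI)
  show "Ck_on k S f"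
  proof (rule Ck_local[OF assms(1)])
    fix x assume "x \<in> S"
    then obtain T where "open T \<and> x \<in> T \<and> T \<subseteq> S \<and> TG k T f" using assms(2) by blast
    then show "\<exists>T. open T \<and> x \<in> T \<and> T \<subseteq> S \<and> Ck_on k T f" unfolding TG_def by blast
  qed
  show "\<forall>x\<in>S. f differentiable at x \<and> deriv f x \<noteq> 0"
  proof
    fix x assume "x \<in> S"
    then obtain T where "open T \<and> x \<in> T \<and> T \<subseteq> S \<and> TG k T f" using assms(2) by blast
    then show "f differentiable at x \<and> deriv f x \<noteq> 0" unfolding TG_def by blast
  qed
qed (use assms in auto)

lemma TG_cong:
  assumes "open S" "\<And>x. x \<in> S \<Longrightarrow> f x = g x" "TG k S f"
  shows "TG k S g"
  unfolding TG_def
proof (intro conjI ballI)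
  have "Ck_on k S f" using assms(3) unfolding TG_def by blast
  note X = Ck_cong[OF assms(1,2) this]
  then show "Ck_on k S g" by simp
  fix x assume x: "x \<in> S"
  have ev: "eventually (\<lambda>y. f y = g y) (nhds x)"
    using assms(1,2) x eventually_nhds by blast
  have "f differentiable (at x)" using assms x by (auto simp: TG_def)
  then show "g differentiable (at x)"
    using has_derivative_transform_within_open[of f _ x UNIV S g] assms x
    unfolding differentiable_def by blast
  have "deriv f x = deriv g x" using ev by (rule deriv_cong_ev) simp
  then show "deriv g x \<noteq> 0" using assms x by (auto simp: TG_def)
qed (use assms in auto)

lemma TG_comp:
  assumes "TG k T f" "TG k S g" "g ` S \<subseteq> T"
  shows "TG k S (\<lambda>x. f (g x))"
proof -
  have oS: "open S" and oT: "open T" and CF: "Ck_on k T f" and CG: "Ck_on k S g"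
    using assms(1,2) unfolding TG_def by auto
  have "(\<lambda>x. f (g x)) differentiable (at x) \<and> deriv (\<lambda>x. f (g x)) x \<noteq> 0" if x: "x \<in> S" for x
  proof -
    have gx: "g x \<in> T" using assms(3) x by auto
    have d1: "g differentiable (at x)" "deriv g x \<noteq> 0" using assms(2) x unfolding TG_def by auto
    have d2: "f differentiable (at (g x))" "deriv f (g x) \<noteq> 0" using assms(1) gx unfolding TG_def by auto
    have e: "deriv (f o g) x = deriv f (g x) * deriv g x" by (rule real_derivative_chain[OF d1(1) d2(1)])
    have "(f o g) differentiable (at x)" by (rule differentiable_chain_at[OF d1(1) d2(1)])
    moreover have "deriv (f o g) x \<noteq> 0" unfolding e using d1(2) d2(2) by simp
    ultimately show ?thesis unfolding o_def by blast
  qed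
  then show ?thesis unfolding TG_def using Ck_comp[OF oS oT assms(3) CF CG] oS by blast
qed

lemma TG_inv:
  assumes "TG k S f" "inj_on f S"
  shows "TG k (f ` S) (inv_into S f)"
proof -
  have S: "open S" and C: "Ck_on k S f" and d: "\<And>x. x \<in> S \<Longrightarrow> f differentiable (at x) \<and> deriv f x \<noteq> 0"
    using assms by (auto simp: TG_def)
  have cf: "continuous_on S f"
    using d by (auto intro!: continuous_at_imp_continuous_on differentiable_imp_continuous_within)
  have cg: "continuous_on (f ` S) (inv_into S f)"
    by (rule continuous_on_inverse_open[OF S cf]) (use assms(2) in auto)
  have oT: "open (f ` S)" by (rule invariance_of_domain[OF cf S assms(2)])
  let ?g = "inv_into S f"
  have der: "(?g has_real_derivative inverse (deriv f (?g y))) (at y)" if y: "y \<in> f ` S" for y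
  proof (rule has_field_derivative_inverse_basic[where t="f ` S"])
    have "?g y \<in> S" using y by (auto simp: inv_into_into)
    then show "(f has_real_derivative deriv f (?g y)) (at (?g y))" "deriv f (?g y) \<noteq> 0"
      using d deriv_of_diff by blast+
    show "continuous (at y) ?g" using cg oT y continuous_on_eq_continuous_at by blast
  qed (use oT y in \<open>auto simp: f_inv_into_f\<close>)
  show ?thesis
    unfolding TG_def
  proof (intro conjI ballI)
    show "Ck_on k (f ` S) ?g" by (rule Ck_inv_fun[OF S assms(2) C d])
    fix y assume y: "y \<in> f ` S"
    show "?g differentiable (at y)" using der[OF y] real_differentiable_def by blast
    have "?g y \<in> S" using y by (auto simp: inv_into_into)
    then show "deriv ?g y \<noteq> 0" using DERIV_imp_deriv[OF der[OF y]] d by simp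
  qed (rule oT)
qed

lemma TG_affine:
  assumes "open S" "a \<noteq> 0"
  shows "TG k S (\<lambda>x. a * x + b)"
  unfolding TG_def
proof (intro conjI ballI)
  show "Ck_on k S (\<lambda>x. a * x + b)"
    using assms by (intro Ck_add Ck_mult Ck_const Ck_id)
  fix x
  have D: "((\<lambda>x. a * x + b) has_real_derivative a) (at x)"
    by (auto intro!: derivative_eq_intros)
  then show "(\<lambda>x. a * x + b) differentiable (at x)" using real_differentiable_def by blast
  show "deriv (\<lambda>x. a * x + b) x \<noteq> 0" using DERIV_imp_deriv[OF D] assms by simp
qed (rule assms)

lemma TG_diffeo:
  assumes "TG k S f" "inj_on f S"
  shows "Ck_diffeo k S (f ` S) f"
  unfolding Ck_diffeo_def
  using assms TG_inv[OF assms] by (auto simp: TG_def inj_on_imp_bij_betw)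

lemma diffeo_TG:
  assumes "Ck_diffeo k S T f" "open S" "open T" "k \<ge> 1"
  shows "TG k S f"
  unfolding TG_def
proof (intro conjI ballI)
  have bij: "bij_betw f S T" and C1: "Ck_on k S f" and C2: "Ck_on k T (inv_into S f)"
    using assms by (auto simp: Ck_diffeo_def)
  show "Ck_on k S f" by (rule C1)
  fix x assume x: "x \<in> S"
  show df: "f differentiable (at x)" using Ck_diff[OF C1 assms(4) x] .
  have fx: "f x \<in> T" using bij x bij_betwE by blast
  have dg: "inv_into S f differentiable (at (f x))" using Ck_diff[OF C2 assms(4) fx] .
  have ev: "eventually (\<lambda>y. (inv_into S f o f) y = y) (nhds x)"
    using assms(2) x bij unfolding eventually_nhds
    by (intro exI[of _ S]) (auto simp: bij_betw_def)
  have "deriv (inv_into S f o f) x = deriv (\<lambda>y. y) x" using ev by (rule deriv_cong_ev) simp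
  then have "deriv (inv_into S f) (f x) * deriv f x = 1"
    using real_derivative_chain[OF df dg] by (simp add: deriv_id')
  then show "deriv f x \<noteq> 0" by auto
qed (rule assms)


definition hp :: "real poly \<Rightarrow> real \<Rightarrow> real" where
  "hp p x = (if 0 < x then poly p (inverse x) * exp (- inverse x) else 0)"

definition hq :: "real poly \<Rightarrow> real poly" where
  "hq p = [:0,0,1:] * (p - pderiv p)"

lemma poly_div_exp_0: "((\<lambda>u. poly p u / exp u) \<longlongrightarrow> (0::real)) at_top"
proof -
  have "((\<lambda>u. \<Sum>i\<le>degree p. coeff p i * (u ^ i / exp u)) \<longlongrightarrow> (\<Sum>i\<le>degree p. coeff p i * 0)) at_top"
    by (intro tendsto_sum tendsto_mult tendsto_const tendsto_power_div_exp_0)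
  then show ?thesis
    by (simp add: poly_altdef sum_divide_distrib)
qed

lemma hp_deriv_pos:
  assumes x: "0 < x"
  shows "(hp p has_real_derivative hp (hq p) x) (at x)"
proof -
  have d1: "((\<lambda>y. poly p (inverse y)) has_real_derivative
      poly (pderiv p) (inverse x) * (- (inverse x ^ Suc (Suc 0)))) (at x)"
    by (rule DERIV_chain2[OF poly_DERIV DERIV_inverse]) (use x in auto)
  have d2: "((\<lambda>y. exp (- inverse y)) has_real_derivative
      exp (- inverse x) * (- (- (inverse x ^ Suc (Suc 0))))) (at x)"
    by (rule DERIV_chain2[OF DERIV_exp DERIV_minus[OF DERIV_inverse]]) (use x in auto)
  have d: "((\<lambda>y. poly p (inverse y) * exp (- inverse y)) has_real_derivative
      hp (hq p) x) (at x)"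
    apply (rule DERIV_cong[OF DERIV_mult[OF d1 d2]])
    using x by (simp add: hp_def hq_def poly_mult algebra_simps power2_eq_square)
  show ?thesis
    by (rule has_field_derivative_transform_within_open[OF d, of "{0<..}"]) (use x in \<open>auto simp: hp_def\<close>)
qed

lemma hp_deriv_neg:
  assumes x: "x < 0"
  shows "(hp p has_real_derivative hp (hq p) x) (at x)"
proof -
  have "((\<lambda>y. 0) has_real_derivative 0) (at x)" by simp
  then have "(hp p has_real_derivative 0) (at x)"
    by (rule has_field_derivative_transform_within_open[of _ _ _ "{..<0}"]) (use x in \<open>auto simp: hp_def\<close>)
  then show ?thesis using x by (simp add: hp_def)
qed

lemma hp_deriv_0: "(hp p has_real_derivative hp (hq p) 0) (at 0)"
proof -
  have R: "((\<lambda>y. (hp p y - hp p 0) / (y - 0)) \<longlongrightarrow> 0) (at_right 0)"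
  proof -
    have lim: "((\<lambda>u. poly (pCons 0 p) u / exp u) \<longlongrightarrow> (0::real)) at_top" by (rule poly_div_exp_0)
    have "((\<lambda>y. poly (pCons 0 p) (inverse y) / exp (inverse y)) \<longlongrightarrow> (0::real)) (at_right 0)"
      by (rule filterlim_compose[OF lim filterlim_inverse_at_top_right])
    moreover have "eventually (\<lambda>y. poly (pCons 0 p) (inverse y) / exp (inverse y) = (hp p y - hp p 0) / (y - 0)) (at_right (0::real))"
      unfolding eventually_at_right_field
      by (intro exI[of _ 1]) (auto simp: hp_def exp_minus field_simps)
    ultimately show ?thesis by (rule Lim_transform_eventually)
  qed
  have L: "((\<lambda>y. (hp p y - hp p 0) / (y - 0)) \<longlongrightarrow> 0) (at_left 0)"
  proof -
    have "eventually (\<lambda>y. 0 = (hp p y - hp p 0) / (y - 0)) (at_left (0::real))"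
      unfolding eventually_at_left_field
      by (intro exI[of _ "-1"]) (auto simp: hp_def)
    then show ?thesis by (rule Lim_transform_eventually[rotated]) simp
  qed
  have "((\<lambda>y. (hp p y - hp p 0) / (y - 0)) \<longlongrightarrow> 0) (at 0)"
    using R L by (simp add: filterlim_split_at)
  then have "(hp p has_real_derivative 0) (at 0)"
    unfolding has_field_derivative_iff by simp
  then show ?thesis by (simp add: hp_def)
qed

lemma hp_deriv: "(hp p has_real_derivative hp (hq p) x) (at x)"
  using hp_deriv_pos hp_deriv_neg hp_deriv_0 by (cases "0 < x"; cases "x < 0") auto

lemma hp_Cn: "Cn_on n S (hp p)"
proof (induction n arbitrary: p)
  case 0
  show ?case unfolding Cn_on.simps
    by (intro continuous_at_imp_continuous_on ballI DERIV_isCont[OF hp_deriv])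
next
  case (Suc n)
  have "deriv (hp p) = hp (hq p)" by (rule ext, rule DERIV_imp_deriv[OF hp_deriv])
  moreover have "\<forall>x\<in>S. hp p differentiable (at x)" using hp_deriv real_differentiable_def by blast
  ultimately show ?case using Suc by simp
qed

lemma hp_nonneg: "hp [:1:] x \<ge> 0"
  by (simp add: hp_def)

lemma hp_pos: "x > 0 \<Longrightarrow> hp [:1:] x > 0"
  by (simp add: hp_def)

lemma hq_nonneg: "hp (hq [:1:]) x \<ge> 0"
  by (simp add: hp_def hq_def)

definition step :: "real \<Rightarrow> real" where
  "step x = hp [:1:] x / (hp [:1:] x + hp [:1:] (1 - x))"

lemma step_den: "hp [:1:] x + hp [:1:] (1 - x) > 0"
proof (cases "x > 0")
  case True then show ?thesis using hp_pos[of x] hp_nonneg[of "1 - x"] by simp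
next
  case False then show ?thesis using hp_pos[of "1 - x"] hp_nonneg[of x] by simp
qed

lemma step_Cn: "Cn_on n S step"
proof -
  let ?h = "hp [:1:]"
  have a: "Cn_on n UNIV (\<lambda>x. 1 + (-1) * x)"
    by (rule Cn_add[OF open_UNIV Cn_const Cn_mult[OF open_UNIV Cn_const Cn_id]])
  have b: "Cn_on n UNIV (\<lambda>x. ?h (1 + (-1) * x))"
    by (rule Cn_comp[OF open_UNIV open_UNIV _ hp_Cn a]) simp
  have c: "Cn_on n UNIV (\<lambda>x. ?h x * inverse (?h x + ?h (1 + (-1) * x)))"
    apply (rule Cn_mult[OF _ hp_Cn], simp)
    apply (rule Cn_inverse, simp)
     apply (rule Cn_add[OF _ hp_Cn b], simp)
    using step_den by (metis add_uminus_conv_diff mult_minus1 order_less_irrefl)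
  have "Cn_on n UNIV step"
    by (rule Cn_cong[OF _ _ c]) (auto simp: step_def divide_inverse)
  then show ?thesis using Cn_mono_set by blast
qed

lemma step_0: "x \<le> 0 \<Longrightarrow> step x = 0"
  by (simp add: step_def hp_def)

lemma step_1: "x \<ge> 1 \<Longrightarrow> step x = 1"
  using step_den[of x] by (simp add: step_def hp_def)

lemma step_bounds: "0 \<le> step x" "step x \<le> 1"
  using step_den[of x] hp_nonneg[of x] hp_nonneg[of "1-x"]
  by (auto simp: step_def divide_le_eq_1)

lemma step_deriv_nonneg: "deriv step x \<ge> 0"
proof -
  let ?h = "hp [:1:]" and ?h' = "hp (hq [:1:])"
  have d1: "(?h has_real_derivative ?h' x) (at x)" by (rule hp_deriv)
  have d2: "((\<lambda>x. ?h (1 - x)) has_real_derivative ?h' (1 - x) * (0 - 1)) (at x)"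
    by (rule DERIV_chain2[OF hp_deriv]) (auto intro!: derivative_eq_intros)
  have d3: "((\<lambda>x. ?h x + ?h (1 - x)) has_real_derivative ?h' x + ?h' (1 - x) * (0 - 1)) (at x)"
    by (rule DERIV_add[OF d1 d2])
  have D: "(step has_real_derivative
      (?h' x * (?h x + ?h (1 - x)) - ?h x * (?h' x + ?h' (1 - x) * (0 - 1))) /
      ((?h x + ?h (1 - x)) * (?h x + ?h (1 - x)))) (at x)"
    unfolding step_def[abs_def]
    by (rule DERIV_divide[OF d1 d3]) (use step_den[of x] in auto)
  have "(?h' x * (?h x + ?h (1 - x)) - ?h x * (?h' x + ?h' (1 - x) * (0 - 1)))
      = ?h' x * ?h (1 - x) + ?h x * ?h' (1 - x)" by (simp add: algebra_simps)
  also have "\<dots> \<ge> 0" using hq_nonneg hp_nonneg by (simp add: add_nonneg_nonneg)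
  finally show ?thesis using DERIV_imp_deriv[OF D] step_den[of x] by simp
qed

lemma step_diff: "step differentiable (at x)"
  using step_Cn[of "Suc 0" UNIV] by simp


lemma deriv_pos_of_mono:
  fixes t :: "real \<Rightarrow> real"
  assumes "strict_mono_on {u<..<v} t" "y \<in> {u<..<v}" "t differentiable (at y)" "deriv t y \<noteq> 0"
  shows "deriv t y > 0"
proof (rule ccontr)
  assume "\<not> deriv t y > 0"
  then have neg: "deriv t y < 0" using assms(4) by simp
  obtain d where d: "d > 0" "\<And>h. h > 0 \<Longrightarrow> h < d \<Longrightarrow> t y > t (y + h)"
    using DERIV_neg_dec_right[OF deriv_of_diff[OF assms(3)] neg] by blast
  define m0 where "m0 = min d (v - y)"
  define h where "h = m0 / 2"
  have m: "m0 > 0" "m0 \<le> d" "m0 \<le> v - y" using d assms(2) by (auto simp: m0_def)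
  have h1: "h > 0" using m unfolding h_def by linarith
  have h2: "h < d" using m unfolding h_def by linarith
  have h3: "y + h < v" using m unfolding h_def by linarith
  note h = h1 h2 h3
  then have "t y < t (y + h)" using assms(1,2) by (auto simp: strict_mono_on_def)
  then show False using d(2)[OF h(1,2)] by simp
qed

lemma TG_deriv_pos:
  assumes "TG k {u<..<v} t" "strict_mono_on {u<..<v} t" "y \<in> {u<..<v}"
  shows "deriv t y > 0"
  using assms deriv_pos_of_mono unfolding TG_def by blast

lemma step_deriv_zero:
  assumes "z < 0 \<or> z > 1"
  shows "deriv step z = 0"
proof -
  have "(step has_real_derivative 0) (at z)"
  proof (cases "z < 0")
    case True
    show ?thesis
      by (rule has_field_derivative_transform_within_open[OF DERIV_const[of 0] _ _ , of "{..<0}"])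
        (use True in \<open>auto simp: step_0\<close>)
  next
    case False
    then have z1: "z > 1" using assms by simp
    show ?thesis
      by (rule has_field_derivative_transform_within_open[OF DERIV_const[of 1] _ _ , of "{1<..}"])
        (use z1 in \<open>auto simp: step_1\<close>)
  qed
  then show ?thesis by (rule DERIV_imp_deriv)
qed

lemma Ck_step: "Ck_on k S step"
  by (rule CkI, rule step_Cn)

lemma Ck_minus: "open S \<Longrightarrow> Ck_on k S f \<Longrightarrow> Ck_on k S g \<Longrightarrow> Ck_on k S (\<lambda>x. f x - g x)"
proof -
  assume S: "open S" and f: "Ck_on k S f" and g: "Ck_on k S g"
  have "Ck_on k S (\<lambda>x. f x + (-1) * g x)" by (rule Ck_add[OF S f Ck_mult[OF S Ck_const g]])
  note X = Ck_cong[OF S _ this, of "\<lambda>x. f x - g x"]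
  show ?thesis by (rule X) simp
qed

lemma TE:
  assumes tg: "TG k {u<..<v} t" and sm: "strict_mono_on {u<..<v} t" and y1: "u < y1" "y1 < v"
  shows "\<exists>T. TG k {u<..} T \<and> strict_mono_on {u<..} T \<and> (\<forall>y\<in>{u<..y1}. T y = t y)"
proof -
  define y2 where "y2 = (y1 + v) / 2"
  have y2: "y1 < y2" "y2 < v" using y1 by (auto simp: y2_def)
  have ct: "continuous_on {y1..y2} t"
    using tg y1 y2 unfolding TG_def by (auto intro: continuous_on_subset[OF Ck_cont])
  have "bounded (t ` {y1..y2})" by (rule compact_imp_bounded[OF compact_continuous_image[OF ct compact_Icc]])
  then obtain B where B0: "\<forall>x\<in>t ` {y1..y2}. norm x \<le> B" unfolding bounded_iff by blast
  have B: "\<bar>t y\<bar> \<le> B" if "y \<in> {y1..y2}" for y using B0 that by auto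
  define c where "c = B + \<bar>y1\<bar> + 1"
  have cpos: "y + c - t y \<ge> 0" if "y \<in> {y1..y2}" for y
    using B[OF that] that by (auto simp: c_def)
  define a where "a = inverse (y2 - y1)"
  have apos: "a > 0" using y2 by (simp add: a_def)
  define lam where "lam y = step (a * y + (- a * y1))" for y
  define bl where "bl y = (1 - lam y) * t y + lam y * (y + c)" for y
  define T where "T y = (if y < v then bl y else y + c)" for y
  have lam0: "lam y = 0" if "y \<le> y1" for y
    unfolding lam_def using apos that
    by (intro step_0) (simp add: algebra_simps mult_left_mono)
  have lam1: "lam y = 1" if "y \<ge> y2" for y
  proof -
    have "a * y + - a * y1 = (y - y1) / (y2 - y1)" unfolding a_def by (simp add: divide_inverse algebra_simps)
    also have "\<dots> \<ge> 1" using that y2 by simp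
    finally show ?thesis unfolding lam_def by (rule step_1)
  qed
  have dlam: "(lam has_real_derivative deriv step (a * y + - a * y1) * a) (at y)" for y
    unfolding lam_def[abs_def]
    by (rule DERIV_chain2[OF deriv_of_diff[OF step_diff]]) (auto intro!: derivative_eq_intros)
  have dlam_nn: "deriv step (a * y + - a * y1) * a \<ge> 0" for y
    using step_deriv_nonneg apos by simp
  have dlam_0: "deriv step (a * y + - a * y1) * a = 0" if "y < y1 \<or> y > y2" for y
  proof -
    have "a * y + - a * y1 = (y - y1) / (y2 - y1)" unfolding a_def by (simp add: divide_inverse algebra_simps)
    moreover have "(y - y1) / (y2 - y1) < 0 \<or> (y - y1) / (y2 - y1) > 1"
      using that y2 by (auto simp: divide_less_0_iff)
    ultimately show ?thesis using step_deriv_zero by simp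
  qed
  have lam_b: "0 \<le> lam y" "lam y \<le> 1" for y unfolding lam_def using step_bounds by auto
  define D where "D y = (1 - lam y) * deriv t y + lam y
      + deriv step (a * y + - a * y1) * a * (y + c - t y)" for y
  have dbl: "(bl has_real_derivative D y) (at y)" if y: "y \<in> {u<..<v}" for y
  proof -
    have dt: "(t has_real_derivative deriv t y) (at y)"
      using tg y unfolding TG_def by (auto intro: deriv_of_diff)
    have "((\<lambda>y. (1 - lam y) * t y + lam y * (y + c)) has_real_derivative
       (0 - deriv step (a * y + - a * y1) * a) * t y + deriv t y * (1 - lam y)
       + (deriv step (a * y + - a * y1) * a * (y + c) + (1 + 0) * lam y)) (at y)"
      by (intro DERIV_add DERIV_mult DERIV_diff DERIV_const dlam dt DERIV_ident)
    then show ?thesis unfolding bl_def[abs_def] D_def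
      by (rule DERIV_cong) (simp add: algebra_simps)
  qed
  have Dpos: "D y > 0" if y: "y \<in> {u<..<v}" for y
  proof -
    have t': "deriv t y > 0" by (rule TG_deriv_pos[OF tg sm y])
    have e: "deriv step (a * y + - a * y1) * a * (y + c - t y) \<ge> 0"
    proof (cases "y < y1 \<or> y > y2")
      case True then show ?thesis using dlam_0[OF True] by (simp only: mult_zero_left order_refl)
    next
      case False then show ?thesis using cpos[of y] dlam_nn[of y] by (auto intro: mult_nonneg_nonneg)
    qed
    show ?thesis
    proof (cases "lam y < 1")
      case True
      then have "(1 - lam y) * deriv t y > 0" using t' by simp
      then show ?thesis using e lam_b[of y] unfolding D_def by linarith
    next
      case False
      then have "lam y = 1" using lam_b[of y] by simp
      then show ?thesis using e unfolding D_def by simp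
    qed
  qed
  have Tbl: "T y = bl y" if "y \<in> {u<..<v}" for y using that by (simp add: T_def)
  have Tlin: "T y = y + c" if "y \<in> {y2<..}" for y
    using that lam1[of y] by (auto simp: T_def bl_def)
  have dT: "\<exists>E. (T has_real_derivative E) (at y) \<and> E > 0" if "y > u" for y
  proof (cases "y < v")
    case True
    then have y: "y \<in> {u<..<v}" using that by simp
    have "(T has_real_derivative D y) (at y)"
      by (rule has_field_derivative_transform_within_open[OF dbl[OF y] _ y]) (auto simp: Tbl)
    then show ?thesis using Dpos[OF y] by blast
  next
    case False
    then have y: "y \<in> {y2<..}" using y2 by simp
    have "((\<lambda>y. y + c) has_real_derivative 1) (at y)" by (auto intro!: derivative_eq_intros)
    then have "(T has_real_derivative 1) (at y)"
      by (rule has_field_derivative_transform_within_open[OF _ _ y]) (auto simp: Tlin)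
    then show ?thesis by auto
  qed
  have smT: "strict_mono_on {u<..} T"
  proof (rule strict_mono_onI)
    fix r s assume rs: "r \<in> {u<..}" "s \<in> {u<..}" "r < s"
    show "T r < T s"
    proof (rule DERIV_pos_imp_increasing[OF rs(3)])
      fix x assume "r \<le> x" "x \<le> s"
      then show "\<exists>y. (T has_real_derivative y) (at x) \<and> 0 < y" using dT rs(1) by simp
    qed
  qed
  have TG1: "TG k {u<..<v} T"
  proof -
    have C: "Ck_on k {u<..<v} bl"
    proof -
      have oS: "open {u<..<v}" by simp
      have Cl: "Ck_on k {u<..<v} lam"
        unfolding lam_def
        by (rule Ck_comp[OF oS open_UNIV subset_UNIV Ck_step Ck_add[OF oS Ck_mult[OF oS Ck_const Ck_id] Ck_const]])
      have Ct: "Ck_on k {u<..<v} t" using tg by (simp add: TG_def)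
      show ?thesis unfolding bl_def
        by (rule Ck_add[OF oS Ck_mult[OF oS Ck_minus[OF oS Ck_const Cl] Ct] Ck_mult[OF oS Cl Ck_add[OF oS Ck_id Ck_const]]])
    qed
    have "TG k {u<..<v} bl"
      unfolding TG_def
    proof (intro conjI ballI C open_greaterThanLessThan)
      fix y assume y: "y \<in> {u<..<v}"
      show "bl differentiable (at y)" using dbl[OF y] real_differentiable_def by blast
      show "deriv bl y \<noteq> 0" using DERIV_imp_deriv[OF dbl[OF y]] Dpos[OF y] by simp
    qed
    then show ?thesis by (rule TG_cong[OF open_greaterThanLessThan, rotated]) (simp add: Tbl)
  qed
  have TG2: "TG k {y2<..} T"
    by (rule TG_cong[OF open_greaterThan _ TG_affine[where a=1 and b=c and S="{y2<..}", simplified]])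
      (auto simp: Tlin)
  have "TG k {u<..} T"
  proof (rule TG_local[OF open_greaterThan])
    fix x assume x: "x \<in> {u<..}"
    show "\<exists>S. open S \<and> x \<in> S \<and> S \<subseteq> {u<..} \<and> TG k S T"
    proof (cases "x < v")
      case True
      then show ?thesis using x TG1 by (intro exI[of _ "{u<..<v}"]) auto
    next
      case False
      then show ?thesis using x TG2 y1 y2 by (intro exI[of _ "{y2<..}"]) auto
    qed
  qed
  moreover have "\<forall>y\<in>{u<..y1}. T y = t y"
    using y1 y2 lam0 by (auto simp: T_def bl_def)
  ultimately show ?thesis using smT by blast
qed


lemma TG_neg: "open S \<Longrightarrow> TG k S (\<lambda>x. - x)"
  using TG_affine[where a="-1" and b=0 and S=S and k=k] by simp

lemma TG_reflect:
  assumes "TG k S t"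
  shows "TG k (uminus ` S) (\<lambda>y. - t (- y))"
proof -
  have oS: "open S" using assms by (simp add: TG_def)
  have o2: "open (uminus ` S)" using oS by (simp add: open_negations)
  have i: "TG k (uminus ` S) (\<lambda>y. t (- y))"
    by (rule TG_comp[OF assms TG_neg[OF o2]]) auto
  show ?thesis by (rule TG_comp[OF TG_neg[OF open_UNIV] i]) simp
qed

lemma TE':
  assumes tg: "TG k {u<..<v} t" and sm: "strict_mono_on {u<..<v} t" and y1: "u < y1" "y1 < v"
  shows "\<exists>T. TG k {..<v} T \<and> strict_mono_on {..<v} T \<and> (\<forall>y\<in>{y1..<v}. T y = t y)"
proof -
  define t2 where "t2 y = - t (- y)" for y
  have tg2: "TG k {-v<..<-u} t2"
    using TG_reflect[OF tg] unfolding t2_def by simp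
  have sm2: "strict_mono_on {-v<..<-u} t2"
    using sm unfolding t2_def strict_mono_on_def by auto
  obtain T2 where T2: "TG k {-v<..} T2" "strict_mono_on {-v<..} T2" "\<forall>y\<in>{-v<..-y1}. T2 y = t2 y"
    using TE[OF tg2 sm2, of "-y1"] y1 by auto
  define T where "T y = - T2 (- y)" for y
  have "TG k {..<v} T"
    using TG_reflect[OF T2(1)] unfolding T_def by simp
  moreover have "strict_mono_on {..<v} T"
    using T2(2) unfolding T_def strict_mono_on_def by auto
  moreover have "\<forall>y\<in>{y1..<v}. T y = t y"
    using T2(3) unfolding T_def t2_def by auto
  ultimately show ?thesis by blast
qed


lemma orient_strict:
  fixes f :: "real \<Rightarrow> real"
  assumes ab: "a < b" and cont: "continuous_on {a..b} f" and inj: "inj_on f {a..b}" and lt: "f a < f b"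
  shows "strict_mono_on {a..b} f"
proof -
  have mid: "f a < f m \<and> f m < f b" if "a < m" "m < b" for m
    using continuous_inj_imp_mono[OF that cont inj] lt by auto
  show ?thesis
  proof (rule strict_mono_onI)
    fix r s assume r: "r \<in> {a..b}" and s: "s \<in> {a..b}" and rs: "r < s"
    show "f r < f s"
    proof (cases "r = a")
      case True
      then show ?thesis using mid[of s] lt s rs by (cases "s = b") auto
    next
      case False
      then have ar: "a < r" using r by simp
      have rb: "r < b" using rs s by simp
      have c2: "continuous_on {a..s} f" using cont s by (auto intro: continuous_on_subset)
      have i2: "inj_on f {a..s}" using inj s by (auto intro: inj_on_subset)
      have "(f a < f r \<and> f r < f s) \<or> (f s < f r \<and> f r < f a)"
        by (rule continuous_inj_imp_mono[OF ar rs c2 i2])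
      then show ?thesis using mid[OF ar rb] by auto
    qed
  qed
qed

lemma image_interval_mono:
  fixes f :: "real \<Rightarrow> real"
  assumes pq: "p < q" and cont: "continuous_on {p..q} f" and sm: "strict_mono_on {p..q} f"
  shows "f ` {p<..<q} = {f p<..<f q}"
proof
  show "f ` {p<..<q} \<subseteq> {f p<..<f q}"
    using sm by (auto simp: strict_mono_on_def)
  show "{f p<..<f q} \<subseteq> f ` {p<..<q}"
  proof
    fix y assume y: "y \<in> {f p<..<f q}"
    obtain x where x: "p \<le> x" "x \<le> q" "f x = y"
      using IVT'[of f p y q] y pq cont by auto
    then have "x \<noteq> p" "x \<noteq> q" using y by auto
    then show "y \<in> f ` {p<..<q}" using x by auto
  qed
qed

locale atl =
  fixes k :: enat and A :: "chart set"
  assumes k1: "k \<ge> 1" and atlas: "Ck_atlas k A"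
begin

lemma A_chart: "(W, c) \<in> A \<Longrightarrow> is_chart (W, c)"
  using atlas unfolding Ck_atlas_def Ck_compatible_family_def by blast

lemma A_open: "(W, c) \<in> A \<Longrightarrow> open W"
  using A_chart unfolding is_chart_def by auto

lemma A_hom: "(W, c) \<in> A \<Longrightarrow> \<exists>c'. homeomorphism W (c ` W) c c'"
  using A_chart unfolding is_chart_def by auto

lemma A_inj: "(W, c) \<in> A \<Longrightarrow> inj_on c W"
proof -
  assume "(W, c) \<in> A"
  then obtain c' where h: "homeomorphism W (c ` W) c c'" using A_hom by blast
  have "\<And>x. x \<in> W \<Longrightarrow> c' (c x) = x" using h by (simp add: homeomorphism_def)
  then show ?thesis by (rule inj_on_inverseI)
qed

lemma A_cont: "(W, c) \<in> A \<Longrightarrow> continuous_on W c"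
  using A_hom unfolding homeomorphism_def by blast

lemma A_cover: "\<exists>W c. (W, c) \<in> A \<and> x \<in> W"
proof -
  have "x \<in> \<Union>(fst ` A)" using atlas by (simp add: Ck_atlas_def)
  then obtain p where "p \<in> A" "x \<in> fst p" by auto
  then show ?thesis by (cases p) auto
qed

lemma A_compat: "(W, c) \<in> A \<Longrightarrow> (W', c') \<in> A \<Longrightarrow> Ck_compatible k (W, c) (W', c')"
  using atlas unfolding Ck_atlas_def Ck_compatible_family_def by blast

lemma A_open_img: "(W, c) \<in> A \<Longrightarrow> open Q \<Longrightarrow> Q \<subseteq> W \<Longrightarrow> open (c ` Q)"
  by (rule invariance_of_domain) (auto intro: continuous_on_subset[OF A_cont] inj_on_subset[OF A_inj])

lemma A_TG:
  assumes "(W, c) \<in> A" "(W', c') \<in> A"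
  shows "TG k (c' ` (W' \<inter> W)) (\<lambda>y. c (inv_into W' c' y))"
proof (cases "W' \<inter> W = {}")
  case True then show ?thesis by (simp add: TG_empty)
next
  case False
  then have "Ck_diffeo k (c' ` (W' \<inter> W)) (c ` (W' \<inter> W)) (c \<circ> inv_into W' c')"
    using A_compat[OF assms(2,1)] unfolding Ck_compatible_def by auto
  then have "TG k (c' ` (W' \<inter> W)) (c \<circ> inv_into W' c')"
    by (rule diffeo_TG)
       (auto intro!: A_open_img[OF assms(1)] A_open_img[OF assms(2)] k1 simp: A_open[OF assms(1)] A_open[OF assms(2)])
  then show ?thesis by (simp add: o_def)
qed

definition good :: "real \<Rightarrow> real \<Rightarrow> (real \<Rightarrow> real) \<Rightarrow> bool" where
  "good a b \<phi> \<longleftrightarrow> a < b \<and> continuous_on {a<..<b} \<phi> \<and> strict_mono_on {a<..<b} \<phi> \<and>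
     (\<forall>W c. (W, c) \<in> A \<longrightarrow> TG k (c ` ({a<..<b} \<inter> W)) (\<lambda>y. \<phi> (inv_into W c y)))"

lemma good_restrict:
  assumes "good a b \<phi>" "a \<le> a'" "a' < b'" "b' \<le> b"
  shows "good a' b' \<phi>"
  unfolding good_def
proof (intro conjI allI impI)
  have sub: "{a'<..<b'} \<subseteq> {a<..<b}" using assms by auto
  show "a' < b'" by fact
  show "continuous_on {a'<..<b'} \<phi>" using assms(1) sub unfolding good_def by (auto intro: continuous_on_subset)
  show "strict_mono_on {a'<..<b'} \<phi>" using assms(1) sub unfolding good_def unfolding strict_mono_on_def by blast
  fix W c assume Wc: "(W, c) \<in> A"
  have "TG k (c ` ({a<..<b} \<inter> W)) (\<lambda>y. \<phi> (inv_into W c y))" using assms(1) Wc unfolding good_def by blast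
  moreover have "open (c ` ({a'<..<b'} \<inter> W))"
    by (rule A_open_img[OF Wc]) (auto intro: open_Int A_open[OF Wc])
  moreover have "c ` ({a'<..<b'} \<inter> W) \<subseteq> c ` ({a<..<b} \<inter> W)" using sub by auto
  ultimately show "TG k (c ` ({a'<..<b'} \<inter> W)) (\<lambda>y. \<phi> (inv_into W c y))"
    using TG_subset by blast
qed

lemma atlas_good: "\<exists>e>0. \<exists>\<phi>. good (x - e) (x + e) \<phi>"
proof -
  obtain W c where Wc: "(W, c) \<in> A" "x \<in> W" using A_cover by blast
  obtain e0 where e0: "e0 > 0" "ball x e0 \<subseteq> W" using A_open[OF Wc(1)] Wc(2) open_contains_ball by blast
  define e where "e = e0 / 2"
  have "{x - e..x + e} \<subseteq> ball x e0" using e0(1) by (auto simp: e_def dist_real_def)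
  then have e: "e > 0" "{x - e..x + e} \<subseteq> W" using e0 by (auto simp: e_def)
  have ci1: "continuous_on {x - e..x + e} c" by (rule continuous_on_subset[OF A_cont[OF Wc(1)] e(2)])
  have ci2: "inj_on c {x - e..x + e}" by (rule inj_on_subset[OF A_inj[OF Wc(1)] e(2)])
  have xe: "x - e < x + e" using e(1) by simp
  have mem: "x - e \<in> {x - e..x + e}" "x + e \<in> {x - e..x + e}" using xe by auto
  have ne: "c (x - e) \<noteq> c (x + e)"
  proof
    assume "c (x - e) = c (x + e)"
    then have "x - e = x + e" using inj_onD[OF ci2 _ mem] by blast
    then show False using xe by simp
  qed
  obtain s :: real where s: "s \<noteq> 0" "strict_mono_on {x - e..x + e} (\<lambda>z. s * c z)"
  proof (cases "c (x - e) < c (x + e)")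
    case True
    have "strict_mono_on {x - e..x + e} c" by (rule orient_strict[OF xe ci1 ci2 True])
    then have sm: "strict_mono_on {x - e..x + e} (\<lambda>z. 1 * c z)" by simp
    show ?thesis by (rule that[OF _ sm]) simp
  next
    case False
    then have lt: "-1 * c (x - e) < -1 * c (x + e)" using ne by simp
    have c1: "continuous_on {x - e..x + e} (\<lambda>z. -1 * c z)" by (rule continuous_on_mult_left[OF ci1])
    have c2: "inj_on (\<lambda>z. -1 * c z) {x - e..x + e}"
    proof (rule inj_onI)
      fix u v assume uv: "u \<in> {x - e..x + e}" "v \<in> {x - e..x + e}" "-1 * c u = -1 * c v"
      then have "c u = c v" by simp
      then show "u = v" using inj_onD[OF ci2 _ uv(1,2)] by blast
    qed
    have sm: "strict_mono_on {x - e..x + e} (\<lambda>z. -1 * c z)" by (rule orient_strict[OF xe c1 c2 lt])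
    show ?thesis by (rule that[OF _ sm]) simp
  qed
  have "good (x - e) (x + e) (\<lambda>z. s * c z)"
    unfolding good_def
  proof (intro conjI allI impI)
    show "x - e < x + e" by (rule xe)
    have "continuous_on {x - e..x + e} (\<lambda>z. s * c z)" by (rule continuous_on_mult_left[OF ci1])
    then show "continuous_on {x - e<..<x + e} (\<lambda>z. s * c z)" by (rule continuous_on_subset) auto
    show "strict_mono_on {x - e<..<x + e} (\<lambda>z. s * c z)"
      using s(2) unfolding strict_mono_on_def by auto
    fix W' c' assume W'c': "(W', c') \<in> A"
    have sub: "{x - e<..<x + e} \<inter> W' \<subseteq> W' \<inter> W" using e by auto
    have op: "open (c' ` ({x - e<..<x + e} \<inter> W'))"
      by (rule A_open_img[OF W'c']) (auto intro: open_Int A_open[OF W'c'])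
    have "TG k (c' ` ({x - e<..<x + e} \<inter> W')) (\<lambda>y. c (inv_into W' c' y))"
      by (rule TG_subset[OF A_TG[OF Wc(1) W'c'] _ op]) (use sub in auto)
    then have "TG k (c' ` ({x - e<..<x + e} \<inter> W')) (\<lambda>y. s * (c (inv_into W' c' y)) + 0)"
      by (rule TG_comp[OF TG_affine[OF open_UNIV s(1)]]) simp
    then show "TG k (c' ` ({x - e<..<x + e} \<inter> W')) (\<lambda>y. s * c (inv_into W' c' y))" by simp
  qed
  then show ?thesis using e by blast
qed

end


context atl begin

lemma A_inv: "(W, c) \<in> A \<Longrightarrow> w \<in> W \<Longrightarrow> inv_into W c (c w) = w"
  by (rule inv_into_f_f[OF A_inj])

lemma A_inv_mem: "y \<in> c ` S \<Longrightarrow> S \<subseteq> W \<Longrightarrow> (W, c) \<in> A \<Longrightarrow> inv_into W c y \<in> S \<and> c (inv_into W c y) = y"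
proof -
  assume y: "y \<in> c ` S" and S: "S \<subseteq> W" and Wc: "(W, c) \<in> A"
  then obtain w where w: "w \<in> S" "y = c w" by auto
  then show ?thesis using A_inv[OF Wc] S by auto
qed

lemma good_parts:
  assumes "good a b \<phi>"
  shows "a < b" "continuous_on {a<..<b} \<phi>" "strict_mono_on {a<..<b} \<phi>"
    "\<And>W c. (W, c) \<in> A \<Longrightarrow> TG k (c ` ({a<..<b} \<inter> W)) (\<lambda>y. \<phi> (inv_into W c y))"
  using assms unfolding good_def by blast+

lemma good_inj: "good a b \<phi> \<Longrightarrow> inj_on \<phi> {a<..<b}"
  using good_parts(3) strict_mono_on_imp_inj_on by blast

lemma good_TG_sub:
  assumes "good a b \<phi>" "(W, c) \<in> A" "open Q" "Q \<subseteq> {a<..<b}"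
  shows "TG k (c ` (Q \<inter> W)) (\<lambda>y. \<phi> (inv_into W c y))"
proof (rule TG_subset[OF good_parts(4)[OF assms(1,2)]])
  show "c ` (Q \<inter> W) \<subseteq> c ` ({a<..<b} \<inter> W)" using assms(4) by auto
  show "open (c ` (Q \<inter> W))" by (rule A_open_img[OF assms(2)]) (auto intro: open_Int assms(3) A_open[OF assms(2)])
qed

lemma trans_TG:
  assumes g1: "good a b \<phi>" and g2: "good a' b' \<psi>" and oQ: "open Q"
    and Q1: "Q \<subseteq> {a<..<b}" and Q2: "Q \<subseteq> {a'<..<b'}"
  shows "TG k (\<psi> ` Q) (\<lambda>y. \<phi> (inv_into Q \<psi> y))"
proof -
  have injQ: "inj_on \<psi> Q" using good_inj[OF g2] Q2 inj_on_subset by blast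
  have contQ: "continuous_on Q \<psi>" using good_parts(2)[OF g2] Q2 continuous_on_subset by blast
  have oI: "open (\<psi> ` Q)" by (rule invariance_of_domain[OF contQ oQ injQ])
  show ?thesis
  proof (rule TG_local[OF oI])
    fix y assume y: "y \<in> \<psi> ` Q"
    define x where "x = inv_into Q \<psi> y"
    have x: "x \<in> Q" "\<psi> x = y" using y by (auto simp: x_def inv_into_into f_inv_into_f)
    obtain W c where Wc: "(W, c) \<in> A" "x \<in> W" using A_cover by blast
    define S where "S = c ` (Q \<inter> W)"
    define f where "f z = \<psi> (inv_into W c z)" for z
    have TGf: "TG k S f" unfolding S_def f_def by (rule good_TG_sub[OF g2 Wc(1) oQ Q2])
    have injf: "inj_on f S"
    proof (rule inj_onI)
      fix z1 z2 assume z: "z1 \<in> S" "z2 \<in> S" "f z1 = f z2"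
      obtain w1 where w1: "w1 \<in> Q \<inter> W" "z1 = c w1" using z(1) by (auto simp: S_def)
      obtain w2 where w2: "w2 \<in> Q \<inter> W" "z2 = c w2" using z(2) by (auto simp: S_def)
      have "\<psi> w1 = \<psi> w2" using z(3) w1 w2 A_inv[OF Wc(1)] by (simp add: f_def)
      then have "w1 = w2" using inj_onD[OF injQ] w1 w2 by blast
      then show "z1 = z2" using w1 w2 by simp
    qed
    have fS: "f ` S = \<psi> ` (Q \<inter> W)"
    proof
      show "f ` S \<subseteq> \<psi> ` (Q \<inter> W)" using A_inv[OF Wc(1)] by (auto simp: S_def f_def)
      show "\<psi> ` (Q \<inter> W) \<subseteq> f ` S"
      proof
        fix z assume "z \<in> \<psi> ` (Q \<inter> W)"
        then obtain w where w: "w \<in> Q \<inter> W" "z = \<psi> w" by auto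
        then have "f (c w) = z" using A_inv[OF Wc(1)] by (simp add: f_def)
        moreover have "c w \<in> S" using w by (simp add: S_def)
        ultimately show "z \<in> f ` S" by blast
      qed
    qed
    have TGi: "TG k (f ` S) (inv_into S f)" by (rule TG_inv[OF TGf injf])
    have TG1: "TG k (c ` ({a<..<b} \<inter> W)) (\<lambda>y. \<phi> (inv_into W c y))" by (rule good_parts(4)[OF g1 Wc(1)])
    have TGc: "TG k (f ` S) (\<lambda>y. \<phi> (inv_into W c (inv_into S f y)))"
    proof (rule TG_comp[OF TG1 TGi])
      have "inv_into S f ` f ` S \<subseteq> S" by (auto simp: inv_into_into)
      also have "S \<subseteq> c ` ({a<..<b} \<inter> W)" using Q1 by (auto simp: S_def)
      finally show "inv_into S f ` f ` S \<subseteq> c ` ({a<..<b} \<inter> W)" .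
    qed
    have oN: "open (f ` S)" using TGi by (simp add: TG_def)
    have eq: "\<phi> (inv_into W c (inv_into S f z)) = \<phi> (inv_into Q \<psi> z)" if z: "z \<in> f ` S" for z
    proof -
      obtain w where w: "w \<in> Q \<inter> W" "z = \<psi> w" using z fS by auto
      have cwS: "c w \<in> S" using w by (simp add: S_def)
      have fcw: "f (c w) = z" using w A_inv[OF Wc(1)] by (simp add: f_def)
      have "inv_into S f z = c w" using inv_into_f_f[OF injf cwS] fcw by simp
      moreover have "inv_into Q \<psi> z = w" using inv_into_f_f[OF injQ] w by simp
      ultimately show ?thesis using A_inv[OF Wc(1)] w by simp
    qed
    have "TG k (f ` S) (\<lambda>y. \<phi> (inv_into Q \<psi> y))" by (rule TG_cong[OF oN eq TGc])
    moreover have "y \<in> f ` S" using fS x Wc(2) by auto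
    moreover have "f ` S \<subseteq> \<psi> ` Q" using fS by auto
    ultimately show "\<exists>T. open T \<and> y \<in> T \<and> T \<subseteq> \<psi> ` Q \<and> TG k T (\<lambda>y. \<phi> (inv_into Q \<psi> y))"
      using oN by blast
  qed
qed

lemma cont_local:
  fixes f :: "real \<Rightarrow> real"
  assumes "open S" "\<And>x. x \<in> S \<Longrightarrow> \<exists>T. open T \<and> x \<in> T \<and> T \<subseteq> S \<and> continuous_on T f"
  shows "continuous_on S f"
  using Cn_local[where S=S and n=0 and f=f] assms by simp

end


context atl begin

lemma glue:
  assumes g1: "good \<alpha> \<beta> \<phi>" and g2: "good \<gamma>0 \<delta> \<psi>"
    and o1: "\<gamma>0 < \<gamma>" "\<alpha> < \<gamma>" "\<gamma> < q0" "q0 < \<beta>" "\<beta> < \<delta>"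
  shows "\<exists>ch. good \<alpha> \<delta> ch \<and> (\<forall>x\<in>{\<alpha><..q0}. ch x = \<phi> x)"
proof -
  define Q where "Q = {\<gamma><..<\<beta>}"
  have Q1: "Q \<subseteq> {\<alpha><..<\<beta>}" and Q2: "Q \<subseteq> {\<gamma>0<..<\<delta>}" using o1 by (auto simp: Q_def)
  have sm2: "strict_mono_on {\<gamma>0<..<\<delta>} \<psi>" by (rule good_parts(3)[OF g2])
  have sm1: "strict_mono_on {\<alpha><..<\<beta>} \<phi>" by (rule good_parts(3)[OF g1])
  have injQ: "inj_on \<psi> Q" using good_inj[OF g2] Q2 inj_on_subset by blast
  have mono2: "\<psi> r < \<psi> s" if "r \<in> {\<gamma>0<..<\<delta>}" "s \<in> {\<gamma>0<..<\<delta>}" "r < s" for r s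
    using sm2 that unfolding strict_mono_on_def by blast
  have mono1: "\<phi> r < \<phi> s" if "r \<in> {\<alpha><..<\<beta>}" "s \<in> {\<alpha><..<\<beta>}" "r < s" for r s
    using sm1 that unfolding strict_mono_on_def by blast
  have img: "\<psi> ` Q = {\<psi> \<gamma><..<\<psi> \<beta>}"
    unfolding Q_def
  proof (rule image_interval_mono)
    show "\<gamma> < \<beta>" using o1 by simp
    show "continuous_on {\<gamma>..\<beta>} \<psi>" by (rule continuous_on_subset[OF good_parts(2)[OF g2]]) (use o1 in auto)
    show "strict_mono_on {\<gamma>..\<beta>} \<psi>" using sm2 o1 unfolding strict_mono_on_def by auto
  qed
  define t where "t y = \<phi> (inv_into Q \<psi> y)" for y
  have TGt: "TG k {\<psi> \<gamma><..<\<psi> \<beta>} t"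
    unfolding t_def img[symmetric] by (rule trans_TG[OF g1 g2 _ Q1 Q2]) (simp add: Q_def)
  have tpsi: "t (\<psi> x) = \<phi> x" if "x \<in> Q" for x
    unfolding t_def using inv_into_f_f[OF injQ that] by simp
  have smt: "strict_mono_on {\<psi> \<gamma><..<\<psi> \<beta>} t"
  proof (rule strict_mono_onI)
    fix r s assume r: "r \<in> {\<psi> \<gamma><..<\<psi> \<beta>}" and s: "s \<in> {\<psi> \<gamma><..<\<psi> \<beta>}" and rs: "r < s"
    obtain xr where xr: "xr \<in> Q" "r = \<psi> xr" using r img by blast
    obtain xs where xs: "xs \<in> Q" "s = \<psi> xs" using s img by blast
    have "xr < xs"
    proof (rule ccontr)
      assume "\<not> xr < xs"
      then have "xs \<le> xr" by simp
      have m: "xs \<in> {\<gamma>0<..<\<delta>}" "xr \<in> {\<gamma>0<..<\<delta>}" using xr xs Q2 by auto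
      have "\<psi> xs \<le> \<psi> xr"
      proof (cases "xs = xr")
        case False then show ?thesis using mono2[OF m] \<open>xs \<le> xr\<close> by simp
      qed simp
      then show False using rs xr xs by simp
    qed
    moreover have "xr \<in> {\<alpha><..<\<beta>}" "xs \<in> {\<alpha><..<\<beta>}" using Q1 xr xs by auto
    ultimately have "\<phi> xr < \<phi> xs" using mono1 by blast
    then show "t r < t s" using tpsi xr xs by simp
  qed
  have y1: "\<psi> \<gamma> < \<psi> q0" "\<psi> q0 < \<psi> \<beta>" using mono2 o1 by auto
  obtain T where T: "TG k {\<psi> \<gamma><..} T" "strict_mono_on {\<psi> \<gamma><..} T" "\<And>y. y \<in> {\<psi> \<gamma><..\<psi> q0} \<Longrightarrow> T y = t y"
    using TE[OF TGt smt y1] by blast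
  define ch where "ch x = (if x \<le> q0 then \<phi> x else T (\<psi> x))" for x
  have E1: "ch x = \<phi> x" if "x \<le> q0" for x using that by (simp add: ch_def)
  have E2: "ch x = T (\<psi> x)" if x: "x \<in> {\<gamma><..<\<delta>}" for x
  proof (cases "x \<le> q0")
    case True
    then have xQ: "x \<in> Q" using x o1 by (simp add: Q_def)
    have "\<psi> x \<in> {\<psi> \<gamma><..\<psi> q0}"
      using mono2[of \<gamma> x] mono2[of x q0] True x o1 by (cases "x = q0") auto
    then show ?thesis using T(3) tpsi[OF xQ] True by (simp add: ch_def)
  next
    case False then show ?thesis by (simp add: ch_def)
  qed
  have psi_img: "\<psi> x \<in> {\<psi> \<gamma><..}" if "x \<in> {\<gamma><..<\<delta>}" for x
    using mono2[of \<gamma> x] that o1 by auto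
  have TGpsi: "TG k (c ` ({\<gamma><..<\<delta>} \<inter> W)) (\<lambda>y. \<psi> (inv_into W c y))" if Wc: "(W, c) \<in> A" for W c
    by (rule good_TG_sub[OF g2 Wc]) (use o1 in auto)
  have TGchi2: "TG k (c ` ({\<gamma><..<\<delta>} \<inter> W)) (\<lambda>y. T (\<psi> (inv_into W c y)))" if Wc: "(W, c) \<in> A" for W c
  proof (rule TG_comp[OF T(1) TGpsi[OF Wc]])
    show "(\<lambda>y. \<psi> (inv_into W c y)) ` c ` ({\<gamma><..<\<delta>} \<inter> W) \<subseteq> {\<psi> \<gamma><..}"
      using A_inv[OF Wc] psi_img by auto
  qed
  have contT: "continuous_on {\<psi> \<gamma><..} T" using T(1) by (auto simp: TG_def intro: Ck_cont)
  have good3: "good \<alpha> \<delta> ch"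
    unfolding good_def
  proof (intro conjI allI impI)
    show "\<alpha> < \<delta>" using o1 by simp
    show "continuous_on {\<alpha><..<\<delta>} ch"
    proof (rule cont_local)
      fix x assume x: "x \<in> {\<alpha><..<\<delta>}"
      show "\<exists>S. open S \<and> x \<in> S \<and> S \<subseteq> {\<alpha><..<\<delta>} \<and> continuous_on S ch"
      proof (cases "x < q0")
        case True
        have "continuous_on {\<alpha><..<q0} \<phi>"
          by (rule continuous_on_subset[OF good_parts(2)[OF g1]]) (use o1 in auto)
        then have "continuous_on {\<alpha><..<q0} ch" by (rule continuous_on_cong[THEN iffD1, rotated 2]) (auto simp: E1)
        then show ?thesis using x True o1 by (intro exI[of _ "{\<alpha><..<q0}"]) auto
      next
        case False
        have c2: "continuous_on {\<gamma><..<\<delta>} \<psi>"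
          by (rule continuous_on_subset[OF good_parts(2)[OF g2]]) (use o1 in auto)
        have "continuous_on {\<gamma><..<\<delta>} (\<lambda>x. T (\<psi> x))"
          by (rule continuous_on_compose2[OF contT c2]) (use psi_img in auto)
        then have "continuous_on {\<gamma><..<\<delta>} ch" by (rule continuous_on_cong[THEN iffD1, rotated 2]) (auto simp: E2)
        then show ?thesis using x False o1 by (intro exI[of _ "{\<gamma><..<\<delta>}"]) auto
      qed
    qed simp
    show "strict_mono_on {\<alpha><..<\<delta>} ch"
    proof (rule strict_mono_onI)
      fix r s assume r: "r \<in> {\<alpha><..<\<delta>}" and s: "s \<in> {\<alpha><..<\<delta>}" and rs: "r < s"
      have right: "ch r < ch s" if "r \<in> {\<gamma><..<\<delta>}" "s \<in> {\<gamma><..<\<delta>}" "r < s" for r s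
        using E2 that psi_img mono2[of r s] T(2) o1 unfolding strict_mono_on_def by auto
      show "ch r < ch s"
      proof (cases "s \<le> q0")
        case True
        then show ?thesis using E1 mono1[of r s] r s rs o1 by auto
      next
        case False
        show ?thesis
        proof (cases "r > \<gamma>")
          case True then show ?thesis using right r s rs by auto
        next
          case rg: False
          have "ch r < ch q0" using E1 mono1[of r q0] r rg o1 by auto
          also have "ch q0 < ch s" using right[of q0 s] False s o1 by auto
          finally show ?thesis .
        qed
      qed
    qed
    fix W c assume Wc: "(W, c) \<in> A"
    have oS: "open (c ` ({\<alpha><..<\<delta>} \<inter> W))"
      by (rule A_open_img[OF Wc]) (auto intro: open_Int A_open[OF Wc])
    show "TG k (c ` ({\<alpha><..<\<delta>} \<inter> W)) (\<lambda>y. ch (inv_into W c y))"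
    proof (rule TG_local[OF oS])
      fix y assume y: "y \<in> c ` ({\<alpha><..<\<delta>} \<inter> W)"
      define x where "x = inv_into W c y"
      have x: "x \<in> {\<alpha><..<\<delta>} \<inter> W" "c x = y" using A_inv_mem[OF y _ Wc] by (auto simp: x_def)
      show "\<exists>T. open T \<and> y \<in> T \<and> T \<subseteq> c ` ({\<alpha><..<\<delta>} \<inter> W) \<and> TG k T (\<lambda>y. ch (inv_into W c y))"
      proof (cases "x < q0")
        case True
        let ?N = "c ` ({\<alpha><..<q0} \<inter> W)"
        have oN: "open ?N" by (rule A_open_img[OF Wc]) (auto intro: open_Int A_open[OF Wc])
        have "TG k ?N (\<lambda>y. \<phi> (inv_into W c y))" by (rule good_TG_sub[OF g1 Wc]) (use o1 in auto)
        then have "TG k ?N (\<lambda>y. ch (inv_into W c y))"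
        proof (rule TG_cong[OF oN, rotated])
          fix z assume z: "z \<in> ?N"
          have "inv_into W c z \<in> {\<alpha><..<q0} \<inter> W" using A_inv_mem[OF z _ Wc] by auto
          then show "\<phi> (inv_into W c z) = ch (inv_into W c z)" using E1 by simp
        qed
        moreover have "y \<in> ?N" using x True by auto
        moreover have "?N \<subseteq> c ` ({\<alpha><..<\<delta>} \<inter> W)" using o1 by auto
        ultimately show ?thesis using oN by blast
      next
        case False
        let ?N = "c ` ({\<gamma><..<\<delta>} \<inter> W)"
        have oN: "open ?N" by (rule A_open_img[OF Wc]) (auto intro: open_Int A_open[OF Wc])
        have "TG k ?N (\<lambda>y. ch (inv_into W c y))"
        proof (rule TG_cong[OF oN _ TGchi2[OF Wc]])
          fix z assume z: "z \<in> ?N"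
          have "inv_into W c z \<in> {\<gamma><..<\<delta>} \<inter> W" using A_inv_mem[OF z _ Wc] by auto
          then show "T (\<psi> (inv_into W c z)) = ch (inv_into W c z)" using E2 by simp
        qed
        moreover have "y \<in> ?N" using x False o1 by auto
        moreover have "?N \<subseteq> c ` ({\<alpha><..<\<delta>} \<inter> W)" using o1 by auto
        ultimately show ?thesis using oN by blast
      qed
    qed
  qed
  moreover have "\<forall>x\<in>{\<alpha><..q0}. ch x = \<phi> x" using E1 by simp
  ultimately show ?thesis by blast
qed

lemma glue':
  assumes g1: "good \<alpha> \<beta> \<phi>" and g2: "good \<gamma> \<delta>0 \<psi>"
    and o1: "\<gamma> < \<alpha>" "\<alpha> < q0" "q0 < \<delta>" "\<delta> < \<delta>0" "\<delta> < \<beta>"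
  shows "\<exists>ch. good \<gamma> \<beta> ch \<and> (\<forall>x\<in>{q0..<\<beta>}. ch x = \<phi> x)"
proof -
  define Q where "Q = {\<alpha><..<\<delta>}"
  have Q1: "Q \<subseteq> {\<alpha><..<\<beta>}" and Q2: "Q \<subseteq> {\<gamma><..<\<delta>0}" using o1 by (auto simp: Q_def)
  have sm2: "strict_mono_on {\<gamma><..<\<delta>0} \<psi>" by (rule good_parts(3)[OF g2])
  have sm1: "strict_mono_on {\<alpha><..<\<beta>} \<phi>" by (rule good_parts(3)[OF g1])
  have injQ: "inj_on \<psi> Q" using good_inj[OF g2] Q2 inj_on_subset by blast
  have mono2: "\<psi> r < \<psi> s" if "r \<in> {\<gamma><..<\<delta>0}" "s \<in> {\<gamma><..<\<delta>0}" "r < s" for r s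
    using sm2 that unfolding strict_mono_on_def by blast
  have mono1: "\<phi> r < \<phi> s" if "r \<in> {\<alpha><..<\<beta>}" "s \<in> {\<alpha><..<\<beta>}" "r < s" for r s
    using sm1 that unfolding strict_mono_on_def by blast
  have img: "\<psi> ` Q = {\<psi> \<alpha><..<\<psi> \<delta>}"
    unfolding Q_def
  proof (rule image_interval_mono)
    show "\<alpha> < \<delta>" using o1 by simp
    show "continuous_on {\<alpha>..\<delta>} \<psi>" by (rule continuous_on_subset[OF good_parts(2)[OF g2]]) (use o1 in auto)
    show "strict_mono_on {\<alpha>..\<delta>} \<psi>" using sm2 o1 unfolding strict_mono_on_def by auto
  qed
  define t where "t y = \<phi> (inv_into Q \<psi> y)" for y
  have TGt: "TG k {\<psi> \<alpha><..<\<psi> \<delta>} t"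
    unfolding t_def img[symmetric] by (rule trans_TG[OF g1 g2 _ Q1 Q2]) (simp add: Q_def)
  have tpsi: "t (\<psi> x) = \<phi> x" if "x \<in> Q" for x
    unfolding t_def using inv_into_f_f[OF injQ that] by simp
  have smt: "strict_mono_on {\<psi> \<alpha><..<\<psi> \<delta>} t"
  proof (rule strict_mono_onI)
    fix r s assume r: "r \<in> {\<psi> \<alpha><..<\<psi> \<delta>}" and s: "s \<in> {\<psi> \<alpha><..<\<psi> \<delta>}" and rs: "r < s"
    obtain xr where xr: "xr \<in> Q" "r = \<psi> xr" using r img by blast
    obtain xs where xs: "xs \<in> Q" "s = \<psi> xs" using s img by blast
    have "xr < xs"
    proof (rule ccontr)
      assume "\<not> xr < xs"
      then have "xs \<le> xr" by simp
      have m: "xs \<in> {\<gamma><..<\<delta>0}" "xr \<in> {\<gamma><..<\<delta>0}" using xr xs Q2 by auto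
      have "\<psi> xs \<le> \<psi> xr"
      proof (cases "xs = xr")
        case False then show ?thesis using mono2[OF m] \<open>xs \<le> xr\<close> by simp
      qed simp
      then show False using rs xr xs by simp
    qed
    moreover have "xr \<in> {\<alpha><..<\<beta>}" "xs \<in> {\<alpha><..<\<beta>}" using Q1 xr xs by auto
    ultimately have "\<phi> xr < \<phi> xs" using mono1 by blast
    then show "t r < t s" using tpsi xr xs by simp
  qed
  have y1: "\<psi> \<alpha> < \<psi> q0" "\<psi> q0 < \<psi> \<delta>" using mono2 o1 by auto
  obtain T where T: "TG k {..<\<psi> \<delta>} T" "strict_mono_on {..<\<psi> \<delta>} T" "\<And>y. y \<in> {\<psi> q0..<\<psi> \<delta>} \<Longrightarrow> T y = t y"
    using TE'[OF TGt smt y1] by blast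
  define ch where "ch x = (if x \<ge> q0 then \<phi> x else T (\<psi> x))" for x
  have E1: "ch x = \<phi> x" if "x \<ge> q0" for x using that by (simp add: ch_def)
  have E2: "ch x = T (\<psi> x)" if x: "x \<in> {\<gamma><..<\<delta>}" for x
  proof (cases "x \<ge> q0")
    case True
    then have xQ: "x \<in> Q" using x o1 by (simp add: Q_def)
    have "\<psi> x \<in> {\<psi> q0..<\<psi> \<delta>}"
      using mono2[of q0 x] mono2[of x \<delta>] True x o1 by (cases "x = q0") auto
    then show ?thesis using T(3) tpsi[OF xQ] True by (simp add: ch_def)
  next
    case False then show ?thesis by (simp add: ch_def)
  qed
  have psi_img: "\<psi> x \<in> {..<\<psi> \<delta>}" if "x \<in> {\<gamma><..<\<delta>}" for x
    using mono2[of x \<delta>] that o1 by auto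
  have TGpsi: "TG k (c ` ({\<gamma><..<\<delta>} \<inter> W)) (\<lambda>y. \<psi> (inv_into W c y))" if Wc: "(W, c) \<in> A" for W c
    by (rule good_TG_sub[OF g2 Wc]) (use o1 in auto)
  have TGchi2: "TG k (c ` ({\<gamma><..<\<delta>} \<inter> W)) (\<lambda>y. T (\<psi> (inv_into W c y)))" if Wc: "(W, c) \<in> A" for W c
  proof (rule TG_comp[OF T(1) TGpsi[OF Wc]])
    show "(\<lambda>y. \<psi> (inv_into W c y)) ` c ` ({\<gamma><..<\<delta>} \<inter> W) \<subseteq> {..<\<psi> \<delta>}"
      using A_inv[OF Wc] psi_img by auto
  qed
  have contT: "continuous_on {..<\<psi> \<delta>} T" using T(1) by (auto simp: TG_def intro: Ck_cont)
  have good3: "good \<gamma> \<beta> ch"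
    unfolding good_def
  proof (intro conjI allI impI)
    show "\<gamma> < \<beta>" using o1 by simp
    show "continuous_on {\<gamma><..<\<beta>} ch"
    proof (rule cont_local)
      fix x assume x: "x \<in> {\<gamma><..<\<beta>}"
      show "\<exists>S. open S \<and> x \<in> S \<and> S \<subseteq> {\<gamma><..<\<beta>} \<and> continuous_on S ch"
      proof (cases "x > q0")
        case True
        have "continuous_on {q0<..<\<beta>} \<phi>"
          by (rule continuous_on_subset[OF good_parts(2)[OF g1]]) (use o1 in auto)
        then have "continuous_on {q0<..<\<beta>} ch" by (rule continuous_on_cong[THEN iffD1, rotated 2]) (auto simp: E1)
        then show ?thesis using x True o1 by (intro exI[of _ "{q0<..<\<beta>}"]) auto
      next
        case False
        have c2: "continuous_on {\<gamma><..<\<delta>} \<psi>"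
          by (rule continuous_on_subset[OF good_parts(2)[OF g2]]) (use o1 in auto)
        have "continuous_on {\<gamma><..<\<delta>} (\<lambda>x. T (\<psi> x))"
          by (rule continuous_on_compose2[OF contT c2]) (use psi_img in auto)
        then have "continuous_on {\<gamma><..<\<delta>} ch" by (rule continuous_on_cong[THEN iffD1, rotated 2]) (auto simp: E2)
        then show ?thesis using x False o1 by (intro exI[of _ "{\<gamma><..<\<delta>}"]) auto
      qed
    qed simp
    show "strict_mono_on {\<gamma><..<\<beta>} ch"
    proof (rule strict_mono_onI)
      fix r s assume r: "r \<in> {\<gamma><..<\<beta>}" and s: "s \<in> {\<gamma><..<\<beta>}" and rs: "r < s"
      have left: "ch r < ch s" if "r \<in> {\<gamma><..<\<delta>}" "s \<in> {\<gamma><..<\<delta>}" "r < s" for r s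
        using E2 that psi_img mono2[of r s] T(2) o1 unfolding strict_mono_on_def by auto
      show "ch r < ch s"
      proof (cases "r \<ge> q0")
        case True
        then show ?thesis using E1 mono1[of r s] r s rs o1 by auto
      next
        case False
        show ?thesis
        proof (cases "s < \<delta>")
          case True then show ?thesis using left r s rs by auto
        next
          case sg: False
          have "ch r < ch q0" using left[of r q0] r False o1 by auto
          also have "ch q0 < ch s" using E1 mono1[of q0 s] s sg o1 by auto
          finally show ?thesis .
        qed
      qed
    qed
    fix W c assume Wc: "(W, c) \<in> A"
    have oS: "open (c ` ({\<gamma><..<\<beta>} \<inter> W))"
      by (rule A_open_img[OF Wc]) (auto intro: open_Int A_open[OF Wc])
    show "TG k (c ` ({\<gamma><..<\<beta>} \<inter> W)) (\<lambda>y. ch (inv_into W c y))"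
    proof (rule TG_local[OF oS])
      fix y assume y: "y \<in> c ` ({\<gamma><..<\<beta>} \<inter> W)"
      define x where "x = inv_into W c y"
      have x: "x \<in> {\<gamma><..<\<beta>} \<inter> W" "c x = y" using A_inv_mem[OF y _ Wc] by (auto simp: x_def)
      show "\<exists>T. open T \<and> y \<in> T \<and> T \<subseteq> c ` ({\<gamma><..<\<beta>} \<inter> W) \<and> TG k T (\<lambda>y. ch (inv_into W c y))"
      proof (cases "x > q0")
        case True
        let ?N = "c ` ({q0<..<\<beta>} \<inter> W)"
        have oN: "open ?N" by (rule A_open_img[OF Wc]) (auto intro: open_Int A_open[OF Wc])
        have "TG k ?N (\<lambda>y. \<phi> (inv_into W c y))" by (rule good_TG_sub[OF g1 Wc]) (use o1 in auto)
        then have "TG k ?N (\<lambda>y. ch (inv_into W c y))"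
        proof (rule TG_cong[OF oN, rotated])
          fix z assume z: "z \<in> ?N"
          have "inv_into W c z \<in> {q0<..<\<beta>} \<inter> W" using A_inv_mem[OF z _ Wc] by auto
          then show "\<phi> (inv_into W c z) = ch (inv_into W c z)" using E1 by simp
        qed
        moreover have "y \<in> ?N" using x True by auto
        moreover have "?N \<subseteq> c ` ({\<gamma><..<\<beta>} \<inter> W)" using o1 by auto
        ultimately show ?thesis using oN by blast
      next
        case False
        let ?N = "c ` ({\<gamma><..<\<delta>} \<inter> W)"
        have oN: "open ?N" by (rule A_open_img[OF Wc]) (auto intro: open_Int A_open[OF Wc])
        have "TG k ?N (\<lambda>y. ch (inv_into W c y))"
        proof (rule TG_cong[OF oN _ TGchi2[OF Wc]])
          fix z assume z: "z \<in> ?N"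
          have "inv_into W c z \<in> {\<gamma><..<\<delta>} \<inter> W" using A_inv_mem[OF z _ Wc] by auto
          then show "T (\<psi> (inv_into W c z)) = ch (inv_into W c z)" using E2 by simp
        qed
        moreover have "y \<in> ?N" using x False o1 by auto
        moreover have "?N \<subseteq> c ` ({\<gamma><..<\<beta>} \<inter> W)" using o1 by auto
        ultimately show ?thesis using oN by blast
      qed
    qed
  qed
  moreover have "\<forall>x\<in>{q0..<\<beta>}. ch x = \<phi> x" using E1 by simp
  ultimately show ?thesis by blast
qed

end


context atl begin

lemma ext:
  assumes g: "good a b \<phi>" and pq: "a < p" "p \<le> q" "q < b"
  shows "\<exists>a' b' \<phi>'. good a' b' \<phi>' \<and> a' < p - r \<and> q + r < b' \<and> (\<forall>x\<in>{p..q}. \<phi>' x = \<phi> x)"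
proof -
  define P where "P r \<longleftrightarrow> (\<exists>a' b' \<phi>'. good a' b' \<phi>' \<and> a' < p - r \<and> q + r < b' \<and> (\<forall>x\<in>{p..q}. \<phi>' x = \<phi> x))" for r
  have down: "P r'" if "P r" "r' \<le> r" for r r'
  proof -
    obtain a' b' \<phi>' where w: "good a' b' \<phi>'" "a' < p - r" "q + r < b'" "\<forall>x\<in>{p..q}. \<phi>' x = \<phi> x"
      using \<open>P r\<close> unfolding P_def by blast
    have "a' < p - r'" "q + r' < b'" using w that by linarith+
    then show ?thesis unfolding P_def using w by blast
  qed
  have P0: "P 0" unfolding P_def using g pq by (intro exI[of _ a] exI[of _ b] exI[of _ \<phi>]) auto
  show ?thesis
  proof (rule ccontr)
    assume nP: "\<not> ?thesis"
    then have nPr: "\<not> P r" unfolding P_def by blast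
    define F where "F = {r. \<not> P r}"
    have Fne: "F \<noteq> {}" using nPr by (auto simp: F_def)
    have Fpos: "x \<ge> 0" if "x \<in> F" for x
    proof (rule ccontr)
      assume "\<not> x \<ge> 0"
      then have "P x" using down[OF P0] by simp
      then show False using that by (simp add: F_def)
    qed
    have bdd: "bdd_below F" unfolding bdd_below_def using Fpos by blast
    define s where "s = Inf F"
    have s0: "s \<ge> 0" unfolding s_def using Fne Fpos by (intro cInf_greatest) auto
    have Pless: "P r'" if "r' < s" for r'
    proof (rule ccontr)
      assume "\<not> P r'"
      then have "r' \<in> F" by (simp add: F_def)
      then have "s \<le> r'" unfolding s_def using bdd by (rule cInf_lower)
      then show False using that by simp
    qed
    obtain e1 \<psi>1 where e1: "e1 > 0" "good (q + s - e1) (q + s + e1) \<psi>1" using atlas_good by blast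
    obtain e2 \<psi>2 where e2: "e2 > 0" "good (p - s - e2) (p - s + e2) \<psi>2" using atlas_good by blast
    define e where "e = min e1 e2"
    have e: "e > 0" "e \<le> e1" "e \<le> e2" using e1 e2 by (auto simp: e_def)
    have g1: "good (q + s - e) (q + s + e) \<psi>1" by (rule good_restrict[OF e1(2)]) (use e in auto)
    have g2: "good (p - s - e) (p - s + e) \<psi>2" by (rule good_restrict[OF e2(2)]) (use e in auto)
    define r0 where "r0 = max 0 (s - e / 2)"
    have r0: "r0 \<ge> 0" "r0 \<ge> s - e / 2" by (auto simp: r0_def)
    have "P r0"
    proof (cases "s > 0")
      case True
      then have "r0 < s" using e by (auto simp: r0_def)
      then show ?thesis by (rule Pless)
    next
      case False
      then have "r0 = 0" using s0 e by (auto simp: r0_def)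
      then show ?thesis using P0 by simp
    qed
    then obtain a' b' \<phi>' where w: "good a' b' \<phi>'" "a' < p - r0" "q + r0 < b'" "\<forall>x\<in>{p..q}. \<phi>' x = \<phi> x"
      unfolding P_def by blast
    obtain b'' \<chi>1 where R: "good a' b'' \<chi>1" "q + s + e / 2 < b''" "\<forall>x\<in>{p..q}. \<chi>1 x = \<phi> x"
    proof (cases "q + s + e / 2 < b'")
      case True
      then show ?thesis using that w by blast
    next
      case False
      define \<gamma> where "\<gamma> = max (q + s - 3 * e / 4) ((q + b') / 2)"
      define q0 where "q0 = (\<gamma> + b') / 2"
      have c1: "q + s - e < \<gamma>" using e by (auto simp: \<gamma>_def)
      have qb: "q < b'" using w(3) r0 by linarith
      have "a' < q" using w(2) r0 pq by linarith
      then have "a' < (q + b') / 2" using qb by (simp add: field_simps)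
      then have c2: "a' < \<gamma>" unfolding \<gamma>_def less_max_iff_disj by blast
      have "q + s - 3 * e / 4 < b'" using w(3) r0 e by linarith
      moreover have "(q + b') / 2 < b'" using qb by (simp add: field_simps)
      ultimately have gb: "\<gamma> < b'" unfolding \<gamma>_def max_less_iff_conj by blast
      have c3: "\<gamma> < q0" "q0 < b'" using gb by (auto simp: q0_def)
      have c5: "b' < q + s + e" using False e by simp
      obtain ch where ch: "good a' (q + s + e) ch" "\<forall>x\<in>{a'<..q0}. ch x = \<phi>' x"
        using glue[OF w(1) g1 c1 c2 c3 c5] by blast
      have "(q + b') / 2 \<le> \<gamma>" unfolding \<gamma>_def by simp
      moreover have "q < (q + b') / 2" using qb by (simp add: field_simps)
      ultimately have "q < q0" using c3 by linarith
      then have "\<forall>x\<in>{p..q}. ch x = \<phi> x" using ch(2) w(2,4) r0 by auto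
      moreover have "q + s + e / 2 < q + s + e" using e by simp
      ultimately show ?thesis using that ch(1) by blast
    qed
    obtain a'' \<chi>2 where L: "good a'' b'' \<chi>2" "a'' < p - s - e / 2" "\<forall>x\<in>{p..q}. \<chi>2 x = \<phi> x"
    proof (cases "a' < p - s - e / 2")
      case True
      then show ?thesis using that R by blast
    next
      case False
      define \<delta> where "\<delta> = min (p - s + 3 * e / 4) ((p + a') / 2)"
      define q0 where "q0 = (a' + \<delta>) / 2"
      have c1: "p - s - e < a'" using False e by simp
      have ap: "a' < p" using w(2) r0 by linarith
      have "a' < p - s + 3 * e / 4" using w(2) r0 e by linarith
      moreover have "a' < (p + a') / 2" using ap by (simp add: field_simps)
      ultimately have ad: "a' < \<delta>" unfolding \<delta>_def min_less_iff_conj by blast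
      have c2: "a' < q0" "q0 < \<delta>" using ad by (auto simp: q0_def)
      have c4: "\<delta> < p - s + e" using e by (auto simp: \<delta>_def)
      have "(p + a') / 2 < p" using ap by (simp add: field_simps)
      then have dp: "\<delta> < p" unfolding \<delta>_def min_less_iff_disj by blast
      have c5: "\<delta> < b''" using dp pq R(2) s0 e by simp
      obtain ch where ch: "good (p - s - e) b'' ch" "\<forall>x\<in>{q0..<b''}. ch x = \<chi>1 x"
        using glue'[OF R(1) g2 c1 c2 c4 c5] by blast
      have "q < b''" using R(2) s0 e by simp
      then have "\<forall>x\<in>{p..q}. ch x = \<phi> x" using ch(2) R(3) c2 dp by auto
      moreover have "p - s - e < p - s - e / 2" using e by simp
      ultimately show ?thesis using that ch(1) by blast
    qed
    have "P (s + e / 2)" unfolding P_def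
      using L R(2) by (intro exI[of _ a''] exI[of _ b''] exI[of _ \<chi>2]) auto
    moreover have "Inf F < s + e / 2" using e by (simp add: s_def)
    then obtain rf where rf: "rf \<in> F" "rf < s + e / 2" using cInf_less_iff[OF Fne bdd] by blast
    ultimately have "P rf" using down by simp
    then show False using rf by (simp add: F_def)
  qed
qed

end


context atl begin

definition Qn :: "nat \<Rightarrow> real \<times> real \<times> (real \<Rightarrow> real) \<Rightarrow> bool" where
  "Qn n x \<longleftrightarrow> good (fst x) (fst (snd x)) (snd (snd x)) \<and> fst x < - (real n + 1) \<and> real n + 1 < fst (snd x)"

definition Ag :: "nat \<Rightarrow> real \<times> real \<times> (real \<Rightarrow> real) \<Rightarrow> real \<times> real \<times> (real \<Rightarrow> real) \<Rightarrow> bool" where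
  "Ag n x y \<longleftrightarrow> (\<forall>z\<in>{- (real n + 1)..real n + 1}. snd (snd y) z = snd (snd x) z)"

lemma Qn_0: "\<exists>x. Qn 0 x"
proof -
  obtain e \<phi> where e: "e > 0" "good (0 - e) (0 + e) \<phi>" using atlas_good by blast
  obtain a' b' \<phi>' where w: "good a' b' \<phi>'" "a' < 0 - 1" "0 + 1 < b'"
    using ext[OF e(2), of 0 0 1] e(1) by auto
  then show ?thesis unfolding Qn_def by (intro exI[of _ "(a', b', \<phi>')"]) auto
qed

lemma Qn_Suc: "Qn n x \<Longrightarrow> \<exists>y. Qn (Suc n) y \<and> Ag n x y"
proof -
  assume q: "Qn n x"
  obtain a b \<phi> where x: "x = (a, b, \<phi>)" by (cases x) auto
  have g: "good a b \<phi>" "a < - (real n + 1)" "real n + 1 < b" using q unfolding Qn_def x by auto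
  obtain a' b' \<phi>' where w: "good a' b' \<phi>'" "a' < - (real n + 1) - 1" "real n + 1 + 1 < b'"
      "\<forall>z\<in>{- (real n + 1)..real n + 1}. \<phi>' z = \<phi> z"
    using ext[OF g(1), of "- (real n + 1)" "real n + 1" 1] g(2,3) by auto
  then show ?thesis unfolding Qn_def Ag_def x
    by (intro exI[of _ "(a', b', \<phi>')"]) (auto simp: algebra_simps)
qed

lemma global_omega:
  "\<exists>\<omega>. continuous_on UNIV \<omega> \<and> strict_mono \<omega> \<and>
     (\<forall>W c. (W, c) \<in> A \<longrightarrow> TG k (c ` W) (\<lambda>y. \<omega> (inv_into W c y)))"
proof -
  obtain f where f: "\<And>n. Qn n (f n) \<and> Ag n (f n) (f (Suc n))"
    using dependent_nat_choice[of Qn Ag, OF Qn_0 Qn_Suc] by blast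
  define ph where "ph n = snd (snd (f n))" for n
  define aa where "aa n = fst (f n)" for n
  define bb where "bb n = fst (snd (f n))" for n
  have gn: "good (aa n) (bb n) (ph n)" "aa n < - (real n + 1)" "real n + 1 < bb n" for n
    using f[of n] unfolding Qn_def aa_def bb_def ph_def by auto
  have agS: "ph (Suc n) z = ph n z" if "z \<in> {- (real n + 1)..real n + 1}" for n z
    using f[of n] that unfolding Ag_def ph_def by auto
  have agm: "ph m z = ph n z" if "n \<le> m" "z \<in> {- (real n + 1)..real n + 1}" for n m z
    using that(1)
  proof (induction m rule: dec_induct)
    case base then show ?case by simp
  next
    case (step m)
    have "z \<in> {- (real m + 1)..real m + 1}" using that(2) step(1) by auto
    then show ?case using agS step by simp
  qed
  define N where "N z = nat \<lceil>\<bar>z\<bar>\<rceil>" for z :: real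
  define \<omega> where "\<omega> z = ph (N z) z" for z
  have Nz: "\<bar>z\<bar> \<le> real (N z)" for z unfolding N_def by linarith
  have loc: "\<omega> z = ph m z" if "z \<in> {- (real m + 1)<..<real m + 1}" for m z
  proof -
    have "\<bar>z\<bar> < real m + 1" using that by auto
    then have NL: "N z \<le> Suc m" unfolding N_def by linarith
    show ?thesis
    proof (cases "N z \<le> m")
      case True
      have "z \<in> {- (real (N z) + 1)..real (N z) + 1}" using Nz[of z] by auto
      then show ?thesis using agm[OF True] by (simp add: \<omega>_def)
    next
      case False
      then have "N z = Suc m" using NL by simp
      moreover have "z \<in> {- (real m + 1)..real m + 1}" using that by auto
      ultimately show ?thesis using agS by (simp add: \<omega>_def)
    qed
  qed
  define T where "T m = {- (real m + 1)<..<real m + 1}" for m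
  have Tsub: "T m \<subseteq> {aa m<..<bb m}" for m using gn[of m] by (auto simp: T_def)
  have inT: "z \<in> T (N z)" for z using Nz[of z] by (auto simp: T_def)
  have cont: "continuous_on UNIV \<omega>"
  proof (rule cont_local)
    fix x :: real
    have "continuous_on (T (N x)) (ph (N x))"
      by (rule continuous_on_subset[OF good_parts(2)[OF gn(1)] Tsub])
    then have "continuous_on (T (N x)) \<omega>"
      by (rule continuous_on_cong[THEN iffD1, rotated 2]) (auto simp: loc T_def)
    then show "\<exists>S. open S \<and> x \<in> S \<and> S \<subseteq> UNIV \<and> continuous_on S \<omega>"
      using inT[of x] by (intro exI[of _ "T (N x)"]) (auto simp: T_def)
  qed simp
  have sm: "strict_mono \<omega>"
  proof (rule strict_monoI)
    fix r s :: real assume rs: "r < s"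
    define m where "m = max (N r) (N s)"
    have rT: "r \<in> T m" and sT: "s \<in> T m" using inT[of r] inT[of s] by (auto simp: T_def m_def)
    then have "r \<in> {aa m<..<bb m}" "s \<in> {aa m<..<bb m}" using Tsub[of m] by auto
    then have "ph m r < ph m s" using good_parts(3)[OF gn(1)[of m]] rs unfolding strict_mono_on_def by blast
    then show "\<omega> r < \<omega> s" using loc[of r m] loc[of s m] rT sT by (simp add: T_def)
  qed
  have TGw: "TG k (c ` W) (\<lambda>y. \<omega> (inv_into W c y))" if Wc: "(W, c) \<in> A" for W c
  proof (rule TG_local)
    show oW: "open (c ` W)" by (rule A_open_img[OF Wc A_open[OF Wc]]) simp
    fix y assume y: "y \<in> c ` W"
    define x where "x = inv_into W c y"
    have x: "x \<in> W" "c x = y" using A_inv_mem[OF y _ Wc] by (auto simp: x_def)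
    define m where "m = N x"
    let ?N = "c ` (T m \<inter> W)"
    have oN: "open ?N" by (rule A_open_img[OF Wc]) (auto intro: open_Int A_open[OF Wc] simp: T_def)
    have "TG k ?N (\<lambda>y. ph m (inv_into W c y))"
      by (rule good_TG_sub[OF gn(1) Wc _ Tsub]) (simp add: T_def)
    then have "TG k ?N (\<lambda>y. \<omega> (inv_into W c y))"
    proof (rule TG_cong[OF oN, rotated])
      fix z assume z: "z \<in> ?N"
      have "inv_into W c z \<in> T m \<inter> W" using A_inv_mem[OF z _ Wc] by auto
      then have "inv_into W c z \<in> {- (real m + 1)<..<real m + 1}" by (simp add: T_def)
      from loc[OF this] show "ph m (inv_into W c z) = \<omega> (inv_into W c z)" by simp
    qed
    moreover have "y \<in> ?N" using x inT[of x] by (auto simp: m_def)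
    ultimately show "\<exists>S. open S \<and> y \<in> S \<and> S \<subseteq> c ` W \<and> TG k S (\<lambda>y. \<omega> (inv_into W c y))"
      using oN by blast
  qed
  show ?thesis using cont sm TGw by blast
qed

end


lemma deriv_arctan_eq: "deriv arctan = (\<lambda>x. inverse (1 + x * x))"
  by (rule ext, rule DERIV_imp_deriv) (use DERIV_arctan in \<open>simp add: power2_eq_square\<close>)

lemma Cn_arctan: "Cn_on n UNIV arctan"
proof (cases n)
  case 0 then show ?thesis by (simp add: continuous_at_imp_continuous_on isCont_arctan)
next
  case (Suc m)
  have "Cn_on m UNIV (\<lambda>x. inverse (1 + x * x))"
  proof (rule Cn_inverse[OF open_UNIV])
    show "Cn_on m UNIV (\<lambda>x::real. 1 + x * x)" by (rule Cn_add[OF open_UNIV Cn_const Cn_mult[OF open_UNIV Cn_id Cn_id]])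
    fix x :: real
    have "0 \<le> x * x" by simp
    then show "1 + x * x \<noteq> 0" by linarith
  qed
  moreover have "\<forall>x\<in>UNIV. arctan differentiable (at x)"
    using DERIV_arctan real_differentiable_def by blast
  ultimately show ?thesis using Suc by (simp add: deriv_arctan_eq)
qed

lemma TG_arctan: "TG k UNIV arctan"
  unfolding TG_def
proof (intro conjI ballI)
  show "Ck_on k UNIV arctan" by (rule CkI, rule Cn_arctan)
  fix x :: real
  show "arctan differentiable (at x)" using DERIV_arctan real_differentiable_def by blast
  have "1 + x * x > 0" by (simp add: add_pos_nonneg)
  then show "deriv arctan x \<noteq> 0" by (simp add: deriv_arctan_eq)
qed simp

lemma arctan_img: "arctan ` UNIV = {- (pi / 2)<..<pi / 2}"
proof
  show "arctan ` UNIV \<subseteq> {- (pi / 2)<..<pi / 2}" using arctan_lbound arctan_ubound by auto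
  show "{- (pi / 2)<..<pi / 2} \<subseteq> arctan ` UNIV"
  proof
    fix y :: real assume "y \<in> {- (pi / 2)<..<pi / 2}"
    then have "arctan (tan y) = y" by (intro arctan_tan) auto
    then show "y \<in> arctan ` UNIV" by (metis rangeI)
  qed
qed

lemma inj_arctan: "inj arctan"
  by (rule injI) (metis tan_arctan)

lemma TG_tan: "TG k {- (pi / 2)<..<pi / 2} tan"
proof -
  have "TG k (arctan ` UNIV) (inv_into UNIV arctan)" by (rule TG_inv[OF TG_arctan inj_arctan])
  then have T: "TG k {- (pi / 2)<..<pi / 2} (inv_into UNIV arctan)" by (simp add: arctan_img)
  show ?thesis
  proof (rule TG_cong[OF _ _ T])
    fix y :: real assume "y \<in> {- (pi / 2)<..<pi / 2}"
    then have "arctan (tan y) = y" by (intro arctan_tan) auto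
    then show "inv_into UNIV arctan y = tan y" by (metis inv_into_f_f[OF inj_arctan UNIV_I])
  qed simp
qed

lemma range_mono_interval:
  fixes f :: "real \<Rightarrow> real"
  assumes cont: "continuous_on UNIV f" and sm: "strict_mono f" and bd: "\<And>x. lo < f x \<and> f x < hi"
  shows "range f = {Inf (range f)<..<Sup (range f)}"
proof
  have bb1: "bdd_below (range f)" unfolding bdd_below_def using bd by (intro exI[of _ lo]) (auto intro: less_imp_le)
  have bb2: "bdd_above (range f)" unfolding bdd_above_def using bd by (intro exI[of _ hi]) (auto intro: less_imp_le)
  note bb = bb1 bb2
  show "range f \<subseteq> {Inf (range f)<..<Sup (range f)}"
  proof
    fix y assume "y \<in> range f"
    then obtain x where x: "y = f x" by auto
    have "Inf (range f) \<le> f (x - 1)" by (rule cInf_lower[OF _ bb(1)]) simp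
    moreover have "f (x - 1) < f x" using sm by (simp add: strict_mono_def)
    moreover have "f (x + 1) \<le> Sup (range f)" by (rule cSup_upper[OF _ bb(2)]) simp
    moreover have "f x < f (x + 1)" using sm by (simp add: strict_mono_def)
    ultimately show "y \<in> {Inf (range f)<..<Sup (range f)}" using x by auto
  qed
  show "{Inf (range f)<..<Sup (range f)} \<subseteq> range f"
  proof
    fix y assume y: "y \<in> {Inf (range f)<..<Sup (range f)}"
    obtain x1 where x1: "f x1 < y" using y cInf_less_iff[of "range f" y] bb by auto
    obtain x2 where x2: "y < f x2" using y less_cSup_iff[of "range f" y] bb by auto
    have "x1 \<le> x2"
    proof (rule ccontr)
      assume "\<not> x1 \<le> x2"
      then have "f x2 < f x1" using sm by (simp add: strict_mono_def)
      then show False using x1 x2 by simp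
    qed
    moreover have "continuous_on {x1..x2} f" using cont by (rule continuous_on_subset) simp
    ultimately obtain x where "f x = y" using IVT'[of f x1 y x2] x1 x2 by auto
    then show "y \<in> range f" by auto
  qed
qed

context atl begin

lemma global_Omega:
  "\<exists>\<Omega>. continuous_on UNIV \<Omega> \<and> strict_mono \<Omega> \<and> surj \<Omega> \<and>
     (\<forall>W c. (W, c) \<in> A \<longrightarrow> TG k (c ` W) (\<lambda>y. \<Omega> (inv_into W c y)))"
proof -
  obtain \<omega> where w: "continuous_on UNIV \<omega>" "strict_mono \<omega>"
      "\<And>W c. (W, c) \<in> A \<Longrightarrow> TG k (c ` W) (\<lambda>y. \<omega> (inv_into W c y))"
    using global_omega by blast
  define w1 where "w1 x = arctan (\<omega> x)" for x
  have ca: "continuous_on UNIV arctan" by (simp add: continuous_at_imp_continuous_on isCont_arctan)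
  have cw1: "continuous_on UNIV w1" unfolding w1_def
    by (rule continuous_on_compose2[OF ca w(1)]) simp
  have smw1: "strict_mono w1" using w(2) by (simp add: strict_mono_def w1_def arctan_less_iff)
  have bdw1: "- (pi / 2) < w1 x \<and> w1 x < pi / 2" for x using arctan_lbound arctan_ubound by (simp add: w1_def)
  define L where "L = Inf (range w1)"
  define M where "M = Sup (range w1)"
  have rng: "range w1 = {L<..<M}" unfolding L_def M_def by (rule range_mono_interval[OF cw1 smw1 bdw1])
  have "w1 0 \<in> {L<..<M}" using rng by blast
  then have LM: "L < M" by simp
  have Lb: "- (pi / 2) \<le> L" unfolding L_def using bdw1 by (intro cInf_greatest) (auto intro: less_imp_le)
  have Mb: "M \<le> pi / 2" unfolding M_def using bdw1 by (intro cSup_least) (auto intro: less_imp_le)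
  define a where "a = pi / (M - L)"
  have apos: "a > 0" using LM by (simp add: a_def)
  have aML: "a * (M - L) = pi" using LM by (simp add: a_def)
  define b where "b = - a * L - pi / 2"
  define aff where "aff z = a * z + b" for z
  have aff_in: "aff z \<in> {- (pi / 2)<..<pi / 2}" if "z \<in> {L<..<M}" for z
  proof -
    have "a * L < a * z" "a * z < a * M" using that apos by auto
    moreover have "a * M - a * L = pi"
    proof -
      have "a * M - a * L = a * (M - L)" by (simp add: algebra_simps)
      also have "\<dots> = pi" using LM by (simp add: a_def)
      finally show ?thesis .
    qed
    ultimately show ?thesis by (auto simp: aff_def b_def)
  qed
  define \<Omega> where "\<Omega> x = tan (aff (w1 x))" for x
  have w1_in: "w1 x \<in> {L<..<M}" for x using rng by auto
  have cont: "continuous_on UNIV \<Omega>"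
  proof -
    have c1: "continuous_on UNIV (\<lambda>x. aff (w1 x))" unfolding aff_def by (intro continuous_intros cw1)
    have ct: "continuous_on {- (pi / 2)<..<pi / 2} tan"
      by (rule continuous_on_tan) (auto dest!: cos_gt_zero_pi)
    show ?thesis unfolding \<Omega>_def by (rule continuous_on_compose2[OF ct c1]) (use aff_in w1_in in auto)
  qed
  have sm: "strict_mono \<Omega>"
  proof (rule strict_monoI)
    fix r s :: real assume "r < s"
    then have "w1 r < w1 s" using smw1 by (simp add: strict_mono_def)
    then have "aff (w1 r) < aff (w1 s)" using apos by (simp add: aff_def)
    then show "\<Omega> r < \<Omega> s" unfolding \<Omega>_def using aff_in[OF w1_in[of r]] aff_in[OF w1_in[of s]]
      by (subst tan_monotone'[symmetric]) auto
  qed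
  have surj: "surj \<Omega>"
  proof -
    have "z \<in> range \<Omega>" for z
    proof -
      define w where "w = (arctan z - b) / a"
      have aw: "aff w = arctan z" using apos by (simp add: aff_def w_def)
      have "a * L + b = - (pi / 2)" by (simp add: b_def)
      moreover have "a * M + b = a * (M - L) - pi / 2" by (simp add: b_def algebra_simps)
      then have "a * M + b = pi / 2" using aML by simp
      moreover have "- (pi / 2) < arctan z" "arctan z < pi / 2" using arctan_lbound arctan_ubound by auto
      ultimately have "a * L < a * w" "a * w < a * M" using aw by (auto simp: aff_def)
      then have "w \<in> {L<..<M}" using apos by auto
      then have "w \<in> range w1" using rng by simp
      then obtain x where x: "w1 x = w" by (metis imageE)
      have "\<Omega> x = z" unfolding \<Omega>_def x aw by (simp add: tan_arctan)
      then show ?thesis by (metis rangeI)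
    qed
    then show ?thesis by auto
  qed
  have TGO: "TG k (c ` W) (\<lambda>y. \<Omega> (inv_into W c y))" if Wc: "(W, c) \<in> A" for W c
  proof -
    have t1: "TG k (c ` W) (\<lambda>y. arctan (\<omega> (inv_into W c y)))"
      by (rule TG_comp[OF TG_arctan w(3)[OF Wc]]) simp
    have t2: "TG k (c ` W) (\<lambda>y. a * arctan (\<omega> (inv_into W c y)) + b)"
      by (rule TG_comp[OF TG_affine[OF open_UNIV] t1]) (use apos in auto)
    have t3: "TG k (c ` W) (\<lambda>y. tan (a * arctan (\<omega> (inv_into W c y)) + b))"
    proof (rule TG_comp[OF TG_tan t2])
      show "(\<lambda>y. a * arctan (\<omega> (inv_into W c y)) + b) ` c ` W \<subseteq> {- (pi / 2)<..<pi / 2}"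
        using aff_in w1_in by (auto simp: aff_def w1_def)
    qed
    then show ?thesis by (simp add: \<Omega>_def aff_def w1_def)
  qed
  show ?thesis using cont sm surj TGO by blast
qed

end


lemma same_compat:
  fixes \<phi> :: "real \<Rightarrow> real"
  assumes inj: "inj \<phi>" and cont: "continuous_on UNIV \<phi>" and U: "open U" and V: "open V"
  shows "Ck_compatible k (U, \<phi>) (V, \<phi>)"
  unfolding Ck_compatible_def
proof (simp, intro disjI2)
  let ?S = "\<phi> ` (U \<inter> V)"
  have oS: "open ?S"
    by (rule invariance_of_domain[OF continuous_on_subset[OF cont] _ inj_on_subset[OF inj]]) (use U V in auto)
  have id: "TG k ?S (\<lambda>y. 1 * y + 0)" by (rule TG_affine[OF oS]) simp
  have T: "TG k ?S (\<phi> \<circ> inv_into U \<phi>)"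
  proof (rule TG_cong[OF oS _ id])
    fix y assume "y \<in> ?S"
    then obtain w where w: "w \<in> U \<inter> V" "y = \<phi> w" by auto
    have "inv_into U \<phi> (\<phi> w) = w" using w inv_into_f_f[OF inj_on_subset[OF inj]] by auto
    then show "1 * y + 0 = (\<phi> \<circ> inv_into U \<phi>) y" using w by simp
  qed
  have i2: "inj_on (\<phi> \<circ> inv_into U \<phi>) ?S"
  proof (rule inj_onI)
    fix y1 y2 assume "y1 \<in> ?S" "y2 \<in> ?S" "(\<phi> \<circ> inv_into U \<phi>) y1 = (\<phi> \<circ> inv_into U \<phi>) y2"
    then show "y1 = y2" by (auto simp: inv_into_f_f[OF inj_on_subset[OF inj]])
  qed
  have im: "(\<phi> \<circ> inv_into U \<phi>) ` ?S = ?S"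
    by (force simp: inv_into_f_f[OF inj_on_subset[OF inj]] image_iff)
  show "Ck_diffeo k ?S ?S (\<phi> \<circ> inv_into U \<phi>)"
    using TG_diffeo[OF T i2] im by simp
qed

context atl begin

lemma compat_chart:
  assumes Wc: "(W, c) \<in> A" and U: "open U" and injp: "inj_on \<phi> U"
    and TGt: "TG k (c ` (U \<inter> W)) (\<lambda>y. \<phi> (inv_into W c y))"
  shows "Ck_compatible k (W, c) (U, \<phi>) \<and> Ck_compatible k (U, \<phi>) (W, c)"
proof -
  let ?S = "c ` (U \<inter> W)"
  define f where "f y = \<phi> (inv_into W c y)" for y
  have memS: "inv_into W c y \<in> U \<inter> W \<and> c (inv_into W c y) = y" if "y \<in> ?S" for y
    using A_inv_mem[OF that _ Wc] by auto
  have injf: "inj_on f ?S"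
  proof (rule inj_onI)
    fix y1 y2 assume y: "y1 \<in> ?S" "y2 \<in> ?S" "f y1 = f y2"
    note m1 = memS[OF y(1)] and m2 = memS[OF y(2)]
    have "\<phi> (inv_into W c y1) = \<phi> (inv_into W c y2)" using y(3) by (simp add: f_def)
    then have "inv_into W c y1 = inv_into W c y2"
      by (rule inj_onD[OF injp]) (use m1 m2 in auto)
    then have "c (inv_into W c y1) = c (inv_into W c y2)" by simp
    then show "y1 = y2" using m1 m2 by simp
  qed
  have fS: "f ` ?S = \<phi> ` (U \<inter> W)"
  proof
    show "f ` ?S \<subseteq> \<phi> ` (U \<inter> W)" using memS by (auto simp: f_def)
    show "\<phi> ` (U \<inter> W) \<subseteq> f ` ?S"
    proof
      fix z assume "z \<in> \<phi> ` (U \<inter> W)"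
      then obtain w where w: "w \<in> U \<inter> W" "z = \<phi> w" by auto
      then have "f (c w) = z" using A_inv[OF Wc] by (simp add: f_def)
      moreover have "c w \<in> ?S" using w by simp
      ultimately show "z \<in> f ` ?S" by blast
    qed
  qed
  have TGf: "TG k ?S f" using TGt by (simp add: f_def[abs_def])
  have D1: "Ck_diffeo k ?S (f ` ?S) f" by (rule TG_diffeo[OF TGf injf])
  have C1: "Ck_compatible k (W, c) (U, \<phi>)"
    unfolding Ck_compatible_def using D1 fS by (simp add: Int_commute f_def[abs_def] o_def)
  define g where "g z = c (inv_into U \<phi> z)" for z
  have TGi: "TG k (f ` ?S) (inv_into ?S f)" by (rule TG_inv[OF TGf injf])
  have oI: "open (f ` ?S)" using TGi by (simp add: TG_def)
  have gz: "inv_into ?S f z = g z" if z: "z \<in> f ` ?S" for z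
  proof -
    obtain w where w: "w \<in> U \<inter> W" "z = \<phi> w" using z fS by auto
    have cwS: "c w \<in> ?S" using w by simp
    have fcw: "f (c w) = z" using w A_inv[OF Wc] by (simp add: f_def)
    have "inv_into ?S f z = c w" using inv_into_f_f[OF injf cwS] fcw by simp
    moreover have "inv_into U \<phi> z = w" using inv_into_f_f[OF injp] w by simp
    ultimately show ?thesis by (simp add: g_def)
  qed
  have TGg: "TG k (f ` ?S) g" by (rule TG_cong[OF oI gz TGi])
  have injg: "inj_on g (f ` ?S)"
  proof (rule inj_onI)
    fix z1 z2 assume z: "z1 \<in> f ` ?S" "z2 \<in> f ` ?S" "g z1 = g z2"
    have "inv_into ?S f z1 = inv_into ?S f z2" using gz[OF z(1)] gz[OF z(2)] z(3) by simp
    then have "f (inv_into ?S f z1) = f (inv_into ?S f z2)" by simp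
    then show "z1 = z2" using f_inv_into_f[OF z(1)] f_inv_into_f[OF z(2)] by simp
  qed
  have gS: "g ` (f ` ?S) = c ` (U \<inter> W)"
  proof
    show "g ` (f ` ?S) \<subseteq> c ` (U \<inter> W)"
    proof
      fix y assume "y \<in> g ` (f ` ?S)"
      then obtain z where z: "z \<in> f ` ?S" "y = g z" by blast
      have "inv_into ?S f z \<in> ?S" by (rule inv_into_into[OF z(1)])
      then show "y \<in> c ` (U \<inter> W)" using gz[OF z(1)] z(2) by simp
    qed
    show "c ` (U \<inter> W) \<subseteq> g ` (f ` ?S)"
    proof
      fix y assume y: "y \<in> c ` (U \<inter> W)"
      then have "f y \<in> f ` ?S" by simp
      moreover have "g (f y) = y" using gz[OF \<open>f y \<in> f ` ?S\<close>] inv_into_f_f[OF injf y] by simp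
      ultimately show "y \<in> g ` (f ` ?S)" by (metis imageI)
    qed
  qed
  have D2: "Ck_diffeo k (f ` ?S) (g ` (f ` ?S)) g" by (rule TG_diffeo[OF TGg injg])
  have C2: "Ck_compatible k (U, \<phi>) (W, c)"
    unfolding Ck_compatible_def using D2 fS gS by (simp add: g_def[abs_def] o_def)
  show ?thesis using C1 C2 by blast
qed

lemma homeo_Omega:
  fixes \<Omega> :: "real \<Rightarrow> real"
  assumes cont: "continuous_on UNIV \<Omega>" and sm: "strict_mono \<Omega>" and sj: "surj \<Omega>"
  shows "homeomorphism UNIV UNIV \<Omega> (inv \<Omega>)"
proof -
  have inj: "inj \<Omega>" by (rule strict_mono_imp_inj_on[OF sm])
  have ci: "continuous_on (\<Omega> ` UNIV) (inv \<Omega>)"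
    by (rule continuous_on_inverse_open[OF open_UNIV cont]) (simp_all add: inv_f_f[OF inj])
  have r: "\<Omega> ` UNIV = UNIV" using sj by simp
  have a1: "\<forall>x\<in>UNIV. inv \<Omega> (\<Omega> x) = x" using inv_f_f[OF inj] by simp
  have a2: "\<forall>y\<in>UNIV. \<Omega> (inv \<Omega> y) = y" using surj_f_inv_f[OF sj] by simp
  have a3: "inv \<Omega> ` UNIV = UNIV"
  proof -
    have "x \<in> inv \<Omega> ` UNIV" for x using a1 by (metis UNIV_I image_eqI)
    then show ?thesis by blast
  qed
  have ci2: "continuous_on UNIV (inv \<Omega>)" using ci r by simp
  show ?thesis unfolding homeomorphism_def using a1 a2 a3 r cont ci2 by blast
qed

end


context atl begin

lemma family_ext:
  assumes ch: "\<And>b. b \<in> B \<Longrightarrow> is_chart b"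
    and BB: "\<And>b b'. b \<in> B \<Longrightarrow> b' \<in> B \<Longrightarrow> Ck_compatible k b b'"
    and AB: "\<And>W c U \<phi>. (W, c) \<in> A \<Longrightarrow> (U, \<phi>) \<in> B \<Longrightarrow>
               Ck_compatible k (W, c) (U, \<phi>) \<and> Ck_compatible k (U, \<phi>) (W, c)"
  shows "Ck_compatible_with k B A"
  unfolding Ck_compatible_with_def Ck_compatible_family_def
proof (intro conjI ballI)
  fix p assume "p \<in> A \<union> B"
  then show "is_chart p"
  proof
    assume "p \<in> A" then show ?thesis using A_chart by (cases p) simp
  qed (rule ch)
next
  fix p q assume p: "p \<in> A \<union> B" and q: "q \<in> A \<union> B"
  obtain W c where pp: "p = (W, c)" by (cases p)
  obtain W' c' where qq: "q = (W', c')" by (cases q)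
  show "Ck_compatible k p q"
  proof (cases "p \<in> A")
    case pA: True
    show ?thesis
    proof (cases "q \<in> A")
      case True then show ?thesis using A_compat pA pp qq by simp
    next
      case False then have "q \<in> B" using q by simp
      then show ?thesis using AB pA pp qq by simp
    qed
  next
    case pB: False
    then have pB: "p \<in> B" using p by simp
    show ?thesis
    proof (cases "q \<in> A")
      case True then show ?thesis using AB[of W' c' W c] pB pp qq by simp
    next
      case False then have "q \<in> B" using q by simp
      then show ?thesis using BB pB by simp
    qed
  qed
qed

lemma part2_loc: "\<exists>\<Omega>. (\<exists>\<Omega>'. homeomorphism UNIV UNIV \<Omega> \<Omega>') \<and> Ck_compatible_with k {(UNIV, \<Omega>)} A"
proof -
  obtain \<Omega> :: "real \<Rightarrow> real" where O: "continuous_on UNIV \<Omega>" "strict_mono \<Omega>" "surj \<Omega>"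
      "\<And>W c. (W, c) \<in> A \<Longrightarrow> TG k (c ` W) (\<lambda>y. \<Omega> (inv_into W c y))"
    using global_Omega by blast
  have hom: "homeomorphism UNIV UNIV \<Omega> (inv \<Omega>)" by (rule homeo_Omega[OF O(1-3)])
  have inj: "inj \<Omega>" by (rule strict_mono_imp_inj_on[OF O(2)])
  have "Ck_compatible_with k {(UNIV, \<Omega>)} A"
  proof (rule family_ext)
    fix b :: chart assume "b \<in> {(UNIV, \<Omega>)}"
    then show "is_chart b" unfolding is_chart_def using hom O(3) by auto
  next
    fix b b' :: chart assume "b \<in> {(UNIV, \<Omega>)}" "b' \<in> {(UNIV, \<Omega>)}"
    then show "Ck_compatible k b b'" using same_compat[OF inj O(1) open_UNIV open_UNIV] by simp
  next
    fix W c U \<phi> assume Wc: "(W, c) \<in> A" and U: "(U, \<phi>) \<in> {(UNIV :: real set, \<Omega>)}"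
    then have U': "U = UNIV" "\<phi> = \<Omega>" by auto
    have "TG k (c ` (UNIV \<inter> W)) (\<lambda>y. \<Omega> (inv_into W c y))" using O(4)[OF Wc] by simp
    then show "Ck_compatible k (W, c) (U, \<phi>) \<and> Ck_compatible k (U, \<phi>) (W, c)"
      unfolding U' by (rule compat_chart[OF Wc open_UNIV inj])
  qed
  then show ?thesis using hom by blast
qed

lemma part1_loc: "\<exists>V. chain_like k V \<and> Ck_compatible_with k (range V) A"
proof -
  obtain \<Omega> :: "real \<Rightarrow> real" where O: "continuous_on UNIV \<Omega>" "strict_mono \<Omega>" "surj \<Omega>"
      "\<And>W c. (W, c) \<in> A \<Longrightarrow> TG k (c ` W) (\<lambda>y. \<Omega> (inv_into W c y))"
    using global_Omega by blast
  have hom: "homeomorphism UNIV UNIV \<Omega> (inv \<Omega>)" by (rule homeo_Omega[OF O(1-3)])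
  have inj: "inj \<Omega>" by (rule strict_mono_imp_inj_on[OF O(2)])
  define D where "D i = \<Omega> -` {real_of_int i<..<real_of_int i + 2}" for i :: int
  define V where "V i = (D i, \<Omega>)" for i :: int
  have oD: "open (D i)" for i unfolding D_def by (rule open_vimage[OF _ O(1)]) simp
  have imgD: "\<Omega> ` D i = {real_of_int i<..<real_of_int i + 2}" for i
    unfolding D_def using O(3) by simp
  have chV: "is_chart (V i)" for i
    unfolding is_chart_def V_def
  proof (simp, intro conjI)
    show "open (D i)" by (rule oD)
    show "open (\<Omega> ` D i)" by (simp add: imgD)
    show "\<exists>\<psi>. homeomorphism (D i) (\<Omega> ` D i) \<Omega> \<psi>"
      using homeomorphism_of_subsets[OF hom subset_UNIV subset_UNIV refl] by blast
  qed
  have VV: "Ck_compatible k b b'" if "b \<in> range V" "b' \<in> range V" for b b'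
    using that same_compat[OF inj O(1) oD oD] by (auto simp: V_def)
  have AV: "Ck_compatible k (W, c) (U, \<phi>) \<and> Ck_compatible k (U, \<phi>) (W, c)"
    if Wc: "(W, c) \<in> A" and U: "(U, \<phi>) \<in> range V" for W c U \<phi>
  proof -
    obtain i where U': "U = D i" "\<phi> = \<Omega>" using U by (auto simp: V_def)
    have op: "open (c ` (D i \<inter> W))" by (rule A_open_img[OF Wc]) (auto intro: open_Int oD A_open[OF Wc])
    have "TG k (c ` (D i \<inter> W)) (\<lambda>y. \<Omega> (inv_into W c y))"
      by (rule TG_subset[OF O(4)[OF Wc] _ op]) auto
    then show ?thesis unfolding U' by (rule compat_chart[OF Wc oD inj_on_subset[OF inj subset_UNIV]])
  qed
  have cw: "Ck_compatible_with k (range V) A"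
  proof (rule family_ext)
    fix b assume "b \<in> range V" then show "is_chart b" using chV by blast
  next
    fix b b' assume "b \<in> range V" "b' \<in> range V" then show "Ck_compatible k b b'" by (rule VV)
  next
    fix W c U \<phi> assume "(W, c) \<in> A" "(U, \<phi>) \<in> range V"
    then show "Ck_compatible k (W, c) (U, \<phi>) \<and> Ck_compatible k (U, \<phi>) (W, c)" by (rule AV)
  qed
  have atlasV: "Ck_atlas k (range V)"
    unfolding Ck_atlas_def Ck_compatible_family_def
  proof (intro conjI ballI)
    fix b assume "b \<in> range V" then show "is_chart b" using chV by auto
  next
    fix b b' assume "b \<in> range V" "b' \<in> range V" then show "Ck_compatible k b b'" by (rule VV)
  next
    show "\<Union> (fst ` range V) = UNIV"
    proof (rule set_eqI, rule iffI)
      fix x :: real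
      define i where "i = \<lceil>\<Omega> x\<rceil> - 1"
      have "real_of_int i < \<Omega> x" "\<Omega> x < real_of_int i + 2" unfolding i_def by linarith+
      then have "x \<in> D i" by (simp add: D_def)
      then show "x \<in> \<Union> (fst ` range V)" by (auto simp: V_def)
    qed simp
  qed
  have int12: "D i \<inter> D (i + 1) = \<Omega> -` {real_of_int i + 1<..<real_of_int i + 2}" for i
    by (auto simp: D_def)
  have G1: "Ck_joinable k (V i) (V (i + 1))" for i
    unfolding Ck_joinable_def
  proof (intro conjI)
    show "Ck_compatible k (V i) (V (i + 1))" by (rule VV) auto
    have i1: "\<Omega> ` (D i \<inter> D (i + 1)) = {real_of_int i + 1<..<real_of_int i + 2}"
      unfolding int12 using O(3) by simp
    have i2: "\<Omega> ` D (i + 1) = {real_of_int i + 1<..<real_of_int i + 3}"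
      using imgD[of "i + 1"] by (simp add: algebra_simps)
    let ?a = "real_of_int i" and ?b = "real_of_int i + 1" and ?c = "real_of_int i + 2" and ?e = "real_of_int i + 3"
    have H: "?a < ?b \<and> ?b < ?c \<and> ?c < ?e \<and> \<Omega> ` D i = {?a<..<?c} \<and> \<Omega> ` (D i \<inter> D (i + 1)) = {?b<..<?c} \<and>
          \<Omega> ` (D i \<inter> D (i + 1)) = {?b<..<?c} \<and> \<Omega> ` D (i + 1) = {?b<..<?e}"
      using imgD[of i] i1 i2 by simp
    have "\<exists>a b c' e. a < b \<and> b < c' \<and> c' < e \<and> \<Omega> ` D i = {a<..<c'} \<and> \<Omega> ` (D i \<inter> D (i + 1)) = {b<..<c'} \<and>
          \<Omega> ` (D i \<inter> D (i + 1)) = {b<..<c'} \<and> \<Omega> ` D (i + 1) = {b<..<e}"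
      apply (rule exI[of _ ?a], rule exI[of _ ?b], rule exI[of _ ?c], rule exI[of _ ?e])
      by (rule H)
    then show "case V i of (U, \<phi>) \<Rightarrow> case V (i + 1) of (V, \<psi>) \<Rightarrow>
       \<exists>a b c' e. a < b \<and> b < c' \<and> c' < e \<and> \<phi> ` U = {a<..<c'} \<and> \<phi> ` (U \<inter> V) = {b<..<c'} \<and>
          \<psi> ` (U \<inter> V) = {b<..<c'} \<and> \<psi> ` V = {b<..<e}"
      unfolding V_def by (simp only: prod.case)
  qed
  have G2: "fst (V j) \<inter> fst (V i) \<inter> fst (V (i + 1)) = {}" if "j \<noteq> i" "j \<noteq> i + 1" for i j
  proof (rule ccontr)
    assume "fst (V j) \<inter> fst (V i) \<inter> fst (V (i + 1)) \<noteq> {}"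
    then obtain x where x: "x \<in> D j" "x \<in> D i \<inter> D (i + 1)" by (auto simp: V_def)
    have a: "real_of_int j < \<Omega> x" "\<Omega> x < real_of_int j + 2" using x(1) by (auto simp: D_def)
    have b: "real_of_int i + 1 < \<Omega> x" "\<Omega> x < real_of_int i + 2" using x(2) int12 by auto
    have "real_of_int j < real_of_int (i + 2)" using a b by simp
    then have j1: "j < i + 2" by (simp only: of_int_less_iff)
    have "real_of_int (i + 1) < real_of_int (j + 2)" using a b by simp
    then have j2: "i + 1 < j + 2" by (simp only: of_int_less_iff)
    show False using j1 j2 that by simp
  qed
  have "chain_like k V" unfolding chain_like_def using atlasV G1 G2 by blast
  then show ?thesis using cw by blast
qed

end

theorem theorem4p5:
  fixes k :: enat
  assumes "k \<ge> 1"
  shows "(\<forall>\<U>. Ck_atlas k \<U> \<longrightarrow>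
            (\<exists>\<V>. chain_like k \<V> \<and> Ck_compatible_with k (range \<V>) \<U>))
       \<and> (\<forall>\<V>. chain_like k \<V> \<longrightarrow>
            (\<exists>\<omega>. (\<exists>\<omega>'. homeomorphism UNIV UNIV \<omega> \<omega>') \<and>
                  Ck_compatible_with k {(UNIV, \<omega>)} (range \<V>)))"
proof (intro conjI allI impI)
  fix U assume "Ck_atlas k U"
  then interpret atl k U using assms by unfold_locales
  show "\<exists>V. chain_like k V \<and> Ck_compatible_with k (range V) U" by (rule part1_loc)
next
  fix V assume "chain_like k V"
  then have "Ck_atlas k (range V)" by (simp add: chain_like_def)
  then interpret atl k "range V" using assms by unfold_locales
  show "\<exists>\<omega>. (\<exists>\<omega>'. homeomorphism UNIV UNIV \<omega> \<omega>') \<and> Ck_compatible_with k {(UNIV, \<omega>)} (range V)"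
    by (rule part2_loc)
qed


end
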